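(* Let $k$ be an algebraically closed field of characteristic $0$, let $d\ge 3$ and $n\ge 2$ be integers, and let $(V_n,\Theta_d)$ be the $d$-linear space over $k$ with basis $v_1,\dots,v_n$ of $V_n$ and $\Theta_d(v_{i_1},\dots,v_{i_d})=1$ if $i_1+\dots+i_d=(d-1)n+1$ and $=0$ otherwise. Let $\mathcal{O}(\Theta_d)$ be its orthogonal group, $\mathrm{Cent}_k(\Theta_d)$ its center, $\mathbf{G}$ the group of $k$-algebra automorphisms of $\mathrm{Cent}_k(\Theta_d)$, and $\chi:\mathcal{O}(\Theta_d)\to\mathbf{G}$ the homomorphism $\chi(\sigma)(f)=\sigma f\sigma^{-1}$. Let $\mu_d=\{\zeta\in k:\zeta^d=1\}$, identified with the subgroup $\{\zeta\,\mathrm{id}_{V_n}\}$ of $\mathcal{O}(\Theta_d)$. Then $$1\longrightarrow\mu_d\longrightarrow\mathcal{O}(\Theta_d)\xrightarrow{\ \chi\ }\mathbf{G}\longrightarrow 1$$ is a short exact sequence of groups.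
   Context: A $d$-linear space over $k$ is a pair $(V,\Theta)$ with $V$ a finite-dimensional $k$-vector space and $\Theta:V^d\to k$ a symmetric $d$-linear form. Its center is $\mathrm{Cent}_k(\Theta)=\{f\in\mathrm{End}_k(V):\Theta(f(u_1),u_2,\dots,u_d)=\Theta(u_1,f(u_2),\dots,u_d)\ \forall u_i\in V\}$, a commutative subalgebra of $\mathrm{End}_k(V)$. The orthogonal group is $\mathcal{O}(\Theta)=\{\sigma\in GL_k(V):\Theta(\sigma u_1,\dots,\sigma u_d)=\Theta(u_1,\dots,u_d)\ \forall u_i\}$; conjugation by elements of $\mathcal{O}(\Theta)$ preserves $\mathrm{Cent}_k(\Theta)$. The linear map $\psi(v_i)=v_{i-1}$ (with $v_0=0$) lies in $\mathrm{Cent}_k(\Theta_d)$. *)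

theory Defs
  imports "HOL-Computational_Algebra.Polynomial" "HOL-Algebra.Coset"
    "Jordan_Normal_Form.Matrix"
begin

text \<open>The basis vector v_i (1 \<le> i \<le> n) is
  the 0-based unit vector with index i - 1, so the condition
  i_1 + ... + i_d = (d-1) n + 1 on 1-based indices is written with a shift by 1.
  The d arguments are given as a function u with u 0, ..., u (d-1) the arguments.\<close>
definition theta :: "nat \<Rightarrow> nat \<Rightarrow> (nat \<Rightarrow> 'k::field vec) \<Rightarrow> 'k" where
  "theta d n u =
     (\<Sum>i \<in> {i \<in> PiE {..<d} (\<lambda>_. {..<n}). (\<Sum>j<d. i j + 1) = (d - 1) * n + 1}.
        \<Prod>j<d. u j $ i j)"

definition args :: "nat \<Rightarrow> nat \<Rightarrow> (nat \<Rightarrow> 'k::field vec) set" where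
  "args d n = {u. \<forall>j<d. u j \<in> carrier_vec n}"

definition cent :: "nat \<Rightarrow> nat \<Rightarrow> 'k::field mat set" where
  "cent d n = {f \<in> carrier_mat n n. \<forall>u \<in> args d n.
      theta d n (u(0 := f *\<^sub>v u 0)) = theta d n (u(1 := f *\<^sub>v u 1))}"

definition orth :: "nat \<Rightarrow> nat \<Rightarrow> 'k::field mat set" where
  "orth d n = {\<sigma> \<in> carrier_mat n n. invertible_mat \<sigma> \<and>
      (\<forall>u \<in> args d n. theta d n (\<lambda>j. \<sigma> *\<^sub>v u j) = theta d n u)}"

definition O_grp :: "nat \<Rightarrow> nat \<Rightarrow> 'k::field mat monoid" where
  "O_grp d n = \<lparr>carrier = orth d n, mult = (*), one = 1\<^sub>m n\<rparr>"

definition algaut :: "nat \<Rightarrow> nat \<Rightarrow> ('k::field mat \<Rightarrow> 'k mat) set" where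
  "algaut d n = {\<phi>. \<phi> \<in> extensional (cent d n) \<and> bij_betw \<phi> (cent d n) (cent d n) \<and>
      (\<forall>f \<in> cent d n. \<forall>g \<in> cent d n. \<phi> (f + g) = \<phi> f + \<phi> g \<and> \<phi> (f * g) = \<phi> f * \<phi> g) \<and>
      (\<forall>c. \<forall>f \<in> cent d n. \<phi> (c \<cdot>\<^sub>m f) = c \<cdot>\<^sub>m \<phi> f) \<and>
      \<phi> (1\<^sub>m n) = 1\<^sub>m n}"

definition G_grp :: "nat \<Rightarrow> nat \<Rightarrow> ('k::field mat \<Rightarrow> 'k mat) monoid" where
  "G_grp d n = \<lparr>carrier = algaut d n,
                 mult = (\<lambda>\<phi> \<psi>. restrict (\<phi> \<circ> \<psi>) (cent d n)),
                 one = restrict id (cent d n)\<rparr>"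

definition mu_grp :: "nat \<Rightarrow> 'k::field monoid" where
  "mu_grp d = \<lparr>carrier = {\<zeta>. \<zeta> ^ d = 1}, mult = (*), one = 1\<rparr>"

definition iota :: "nat \<Rightarrow> 'k::field \<Rightarrow> 'k mat" where
  "iota n \<zeta> = \<zeta> \<cdot>\<^sub>m 1\<^sub>m n"

definition chi :: "nat \<Rightarrow> nat \<Rightarrow> 'k::field mat \<Rightarrow> ('k mat \<Rightarrow> 'k mat)" where
  "chi d n \<sigma> = restrict (\<lambda>f. \<sigma> * f * inv\<^bsub>O_grp d n\<^esub> \<sigma>) (cent d n)"

end

theory Submission
  imports Defs "HOL-Computational_Algebra.Formal_Power_Series"
begin


definition Fv :: "nat \<Rightarrow> 'k::field vec \<Rightarrow> 'k fps" where
  "Fv n v = Abs_fps (\<lambda>e. if e < n then v $ (n - 1 - e) else 0)"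
definition Vf :: "nat \<Rightarrow> 'k::field fps \<Rightarrow> 'k vec" where
  "Vf n a = vec n (\<lambda>i. fps_nth a (n - 1 - i))"
definition eqn :: "nat \<Rightarrow> 'k::field fps \<Rightarrow> 'k fps \<Rightarrow> bool" where
  "eqn n a b \<longleftrightarrow> (\<forall>e<n. fps_nth a e = fps_nth b e)"
definition mk :: "nat \<Rightarrow> ('k::field fps \<Rightarrow> 'k fps) \<Rightarrow> 'k mat" where
  "mk n L = mat n n (\<lambda>(r,c). fps_nth (L (fps_X ^ (n - 1 - c))) (n - 1 - r))"
definition linf :: "('k::field fps \<Rightarrow> 'k fps) \<Rightarrow> bool" where
  "linf L \<longleftrightarrow> (\<forall>a b. L (a + b) = L a + L b) \<and> (\<forall>c a. L (fps_const c * a) = fps_const c * L a)"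
definition resp :: "nat \<Rightarrow> ('k::field fps \<Rightarrow> 'k fps) \<Rightarrow> bool" where
  "resp n L \<longleftrightarrow> (\<forall>a b. eqn n a b \<longrightarrow> eqn n (L a) (L b))"

lemma eqn_refl[simp]: "eqn n a a" by (simp add: eqn_def)
lemma eqn_sym: "eqn n a b \<Longrightarrow> eqn n b a" by (simp add: eqn_def)
lemma eqn_trans: "eqn n a b \<Longrightarrow> eqn n b c \<Longrightarrow> eqn n a c" by (simp add: eqn_def)
lemma eqn_add: "eqn n a a' \<Longrightarrow> eqn n b b' \<Longrightarrow> eqn n (a + b) (a' + b')"
  by (simp add: eqn_def)
lemma eqn_mult: "eqn n a a' \<Longrightarrow> eqn n b b' \<Longrightarrow> eqn n (a * b) (a' * b')"
  unfolding eqn_def fps_mult_nth by (auto intro!: sum.cong)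
lemma eqn_power: "eqn n a a' \<Longrightarrow> eqn n (a ^ k) (a' ^ k)"
  by (induction k) (auto intro: eqn_mult)
lemma eqn_prod: "(\<And>j. j \<in> S \<Longrightarrow> eqn n (f j) (g j)) \<Longrightarrow> eqn n (prod f S) (prod g S)"
  by (induction S rule: infinite_finite_induct) (auto intro: eqn_mult)

lemma Vf_carrier[simp]: "Vf n a \<in> carrier_vec n" by (simp add: Vf_def)
lemma dim_Vf[simp]: "dim_vec (Vf n a) = n" by (simp add: Vf_def)
lemma Vf_Fv: "v \<in> carrier_vec n \<Longrightarrow> Vf n (Fv n v) = v"
  by (auto simp: Vf_def Fv_def)
lemma Fv_Vf: "eqn n (Fv n (Vf n a)) a"
  by (auto simp: Vf_def Fv_def eqn_def)
lemma Vf_eq: "eqn n a b \<Longrightarrow> Vf n a = Vf n b"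
  by (auto simp: Vf_def eqn_def)
lemma Vf_eqD: "Vf n a = Vf n b \<Longrightarrow> eqn n a b"
  unfolding eqn_def
proof (intro allI impI)
  fix e assume "Vf n a = Vf n b" "e < n"
  then have "Vf n a $ (n - 1 - e) = Vf n b $ (n - 1 - e)" by simp
  then show "fps_nth a e = fps_nth b e" using \<open>e < n\<close> by (simp add: Vf_def)
qed
lemma Vf_eq_iff: "Vf n a = Vf n b \<longleftrightarrow> eqn n a b"
  using Vf_eq Vf_eqD by blast

lemma Fv_sum: assumes "v \<in> carrier_vec n"
  shows "Fv n v = (\<Sum>c<n. fps_const (v $ c) * fps_X ^ (n - 1 - c))"
proof (rule fps_ext)
  fix e
  have "fps_nth (\<Sum>c<n. fps_const (v $ c) * fps_X ^ (n - 1 - c)) e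
      = (\<Sum>c<n. if c = n - 1 - e \<and> e < n then v $ c else 0)"
    by (auto simp: fps_sum_nth intro!: sum.cong)
  also have "\<dots> = (if e < n then v $ (n - 1 - e) else 0)"
    by (cases "e < n") (auto simp: sum.delta)
  finally show "fps_nth (Fv n v) e = fps_nth (\<Sum>c<n. fps_const (v $ c) * fps_X ^ (n - 1 - c)) e"
    by (simp add: Fv_def)
qed

lemma linf_0: "linf L \<Longrightarrow> L 0 = 0"
  unfolding linf_def by (metis add_cancel_right_right add_0)

lemma linf_sum: assumes "linf L"
  shows "L (\<Sum>c\<in>S. fps_const (f c) * g c) = (\<Sum>c\<in>S. fps_const (f c) * L (g c))"
proof (induction S rule: infinite_finite_induct)
  case (infinite A) then show ?case using linf_0[OF assms] by simp
next
  case empty then show ?case using linf_0[OF assms] by simp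
next
  case (insert x F) then show ?case using assms by (simp add: linf_def)
qed

lemma mk_carrier[simp]: "mk n L \<in> carrier_mat n n" by (simp add: mk_def)
lemma dim_mk[simp]: "dim_row (mk n L) = n" "dim_col (mk n L) = n" by (simp_all add: mk_def)

lemma mk_vec: assumes "linf L" "v \<in> carrier_vec n"
  shows "mk n L *\<^sub>v v = Vf n (L (Fv n v))"
proof (rule eq_vecI)
  fix r assume "r < dim_vec (Vf n (L (Fv n v)))"
  then have r: "r < n" by simp
  have "L (Fv n v) = (\<Sum>c<n. fps_const (v $ c) * L (fps_X ^ (n - 1 - c)))"
    using Fv_sum[OF assms(2)] linf_sum[OF assms(1)] by simp
  then have "Vf n (L (Fv n v)) $ r = (\<Sum>c<n. v $ c * fps_nth (L (fps_X ^ (n - 1 - c))) (n - 1 - r))"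
    using r by (simp add: Vf_def fps_sum_nth)
  moreover have "(mk n L *\<^sub>v v) $ r = (\<Sum>c<n. fps_nth (L (fps_X ^ (n - 1 - c))) (n - 1 - r) * v $ c)"
    using r assms(2) by (simp add: mk_def scalar_prod_def lessThan_atLeast0)
  ultimately show "(mk n L *\<^sub>v v) $ r = Vf n (L (Fv n v)) $ r"
    by (simp add: mult.commute)
qed (use assms in auto)

lemma mat_eq_vec: fixes A B :: "'a::field mat" assumes "A \<in> carrier_mat n n" "B \<in> carrier_mat n n"
  "\<And>v. v \<in> carrier_vec n \<Longrightarrow> A *\<^sub>v v = B *\<^sub>v v"
  shows "A = B"
proof (rule eq_matI)
  fix i j assume "i < dim_row B" "j < dim_col B"
  then have ij: "i < n" "j < n" using assms by auto
  have "(A *\<^sub>v unit_vec n j) $ i = (B *\<^sub>v unit_vec n j) $ i" using assms(3) by simp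
  moreover have "(A *\<^sub>v unit_vec n j) $ i = A $$ (i,j)"
    using ij assms(1) by (simp add: scalar_prod_def unit_vec_def mult_delta_right sum.delta cong: if_cong)
  moreover have "(B *\<^sub>v unit_vec n j) $ i = B $$ (i,j)"
    using ij assms(2) by (simp add: scalar_prod_def unit_vec_def mult_delta_right sum.delta cong: if_cong)
  ultimately show "A $$ (i,j) = B $$ (i,j)" by simp
qed (use assms in auto)

lemma linf_comp: "linf L1 \<Longrightarrow> linf L2 \<Longrightarrow> linf (L1 \<circ> L2)"
  by (simp add: linf_def)

lemma mk_mult: assumes "linf L1" "linf L2" "resp n L1"
  shows "mk n L1 * mk n L2 = mk n (\<lambda>a. L1 (L2 a))"
proof (rule mat_eq_vec[of _ n])
  fix v :: "'a vec" assume v: "v \<in> carrier_vec n"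
  have "(mk n L1 * mk n L2) *\<^sub>v v = mk n L1 *\<^sub>v (mk n L2 *\<^sub>v v)"
    using v by (simp add: assoc_mult_mat_vec[of _ n n _ n])
  also have "\<dots> = Vf n (L1 (Fv n (Vf n (L2 (Fv n v)))))"
    using assms v by (simp add: mk_vec)
  also have "\<dots> = Vf n (L1 (L2 (Fv n v)))"
    using assms(3) Fv_Vf by (auto simp: resp_def intro!: Vf_eq)
  also have "\<dots> = mk n (\<lambda>a. L1 (L2 a)) *\<^sub>v v"
    using linf_comp[OF assms(1,2)] v by (simp add: mk_vec comp_def)
  finally show "(mk n L1 * mk n L2) *\<^sub>v v = mk n (\<lambda>a. L1 (L2 a)) *\<^sub>v v" .
qed (auto simp: mult_carrier_mat)

lemma mk_cong: "(\<And>a. eqn n (L a) (L' a)) \<Longrightarrow> mk n L = mk n L'"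
  by (auto simp: mk_def eqn_def)

lemma mk_id: "mk n (\<lambda>a. a) = 1\<^sub>m n"
  by (rule eq_matI) (auto simp: mk_def)

lemma mk_add: "mk n (\<lambda>a. L1 a + L2 a) = mk n L1 + mk n L2"
  by (rule eq_matI) (auto simp: mk_def)

lemma mk_smult: "mk n (\<lambda>a. fps_const c * L a) = c \<cdot>\<^sub>m mk n L"
  by (rule eq_matI) (auto simp: mk_def)


definition M :: "nat \<Rightarrow> 'k::field fps \<Rightarrow> 'k mat" where
  "M n a = mk n (\<lambda>b. a * b)"

lemma linf_M[simp]: "linf (\<lambda>b. a * b)"
  by (simp add: linf_def algebra_simps)
lemma resp_M[simp]: "resp n (\<lambda>b. a * b)"
  by (simp add: resp_def eqn_mult)
lemma M_carrier[simp]: "M n a \<in> carrier_mat n n" by (simp add: M_def)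
lemma M_vec: "v \<in> carrier_vec n \<Longrightarrow> M n a *\<^sub>v v = Vf n (a * Fv n v)"
  by (simp add: M_def mk_vec)
lemma M_mult: "M n a * M n b = M n (a * b)"
  unfolding M_def by (subst mk_mult) (auto intro!: mk_cong simp: mult.assoc)
lemma M_one: "M n 1 = 1\<^sub>m n"
proof -
  have "M n 1 = mk n (\<lambda>a. a)" unfolding M_def by (rule mk_cong) simp
  then show ?thesis by (simp add: mk_id)
qed
lemma M_eq: "eqn n a b \<Longrightarrow> M n a = M n b"
  unfolding M_def by (rule mk_cong) (simp add: eqn_mult)
lemma M_add: "M n (a + b) = M n a + M n b"
proof -
  have "M n (a + b) = mk n (\<lambda>x. a * x + b * x)" unfolding M_def by (rule mk_cong) (simp add: distrib_right)
  then show ?thesis by (simp add: mk_add M_def)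
qed
lemma M_smult: "M n (fps_const c * a) = c \<cdot>\<^sub>m M n a"
proof -
  have "M n (fps_const c * a) = mk n (\<lambda>x. fps_const c * (a * x))" unfolding M_def by (rule mk_cong) (simp add: mult.assoc)
  then show ?thesis by (simp add: mk_smult M_def)
qed

lemma Fv_Vf1: "n > 0 \<Longrightarrow> eqn n (Fv n (Vf n 1)) 1"
  by (rule Fv_Vf)

lemma M_Vf1: "M n a *\<^sub>v Vf n 1 = Vf n a"
proof -
  have "M n a *\<^sub>v Vf n 1 = Vf n (a * Fv n (Vf n 1))" by (simp add: M_vec)
  also have "\<dots> = Vf n (a * 1)" by (rule Vf_eq, rule eqn_mult, simp, rule Fv_Vf)
  finally show ?thesis by simp
qed

lemma M_inj: "M n a = M n b \<Longrightarrow> eqn n a b"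
  using M_Vf1[of n a] M_Vf1[of n b] Vf_eqD by metis

lemma fps_const_prod: "fps_const (prod f S) = (\<Prod>x\<in>S. fps_const (f x) :: 'k::field fps)"
  by (induction S rule: infinite_finite_induct) (auto simp: fps_const_mult[symmetric])

lemma theta_fps:
  assumes u: "u \<in> args d n" and n: "n \<ge> 1" and d: "d \<ge> 1"
  shows "theta d n u = fps_nth (\<Prod>j<d. Fv n (u j)) (n - 1)"
proof -
  define P where "P = PiE {..<d} (\<lambda>_. {..<n::nat})"
  have fin: "finite P" unfolding P_def by (simp add: finite_PiE)
  have uc: "u j \<in> carrier_vec n" if "j < d" for j using u that by (simp add: args_def)
  have "(\<Prod>j<d. Fv n (u j)) = (\<Prod>j<d. \<Sum>c<n. fps_const (u j $ c) * fps_X ^ (n - 1 - c))"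
    using uc by (simp add: Fv_sum)
  also have "\<dots> = (\<Sum>p\<in>P. \<Prod>j<d. fps_const (u j $ p j) * fps_X ^ (n - 1 - p j))"
    unfolding P_def by (rule prod_sum_PiE) auto
  also have "\<dots> = (\<Sum>p\<in>P. fps_const (\<Prod>j<d. u j $ p j) * fps_X ^ (\<Sum>j<d. n - 1 - p j))"
    by (simp add: prod.distrib fps_const_prod power_sum)
  finally have eq: "fps_nth (\<Prod>j<d. Fv n (u j)) (n - 1)
     = (\<Sum>p\<in>P. if n - 1 = (\<Sum>j<d. n - 1 - p j) then (\<Prod>j<d. u j $ p j) else 0)"
    by (auto simp add: fps_sum_nth intro!: sum.cong)
  have key: "(\<Sum>j<d. p j + 1) = (d - 1) * n + 1 \<longleftrightarrow> n - 1 = (\<Sum>j<d. n - 1 - p j)"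
    if p: "p \<in> P" for p
  proof -
    have pl: "p j < n" if "j < d" for j using p that by (auto simp: P_def)
    have s: "(\<Sum>j<d. n - 1 - p j) + (\<Sum>j<d. p j) = d * (n - 1)"
    proof -
      have "(\<Sum>j<d. n - 1 - p j) + (\<Sum>j<d. p j) = (\<Sum>j<d. n - 1 - p j + p j)"
        by (simp add: sum.distrib del: Suc_eq_plus1 add: Suc_eq_plus1[symmetric] sum_Suc)
      also have "\<dots> = (\<Sum>j<d. n - 1)" using pl by (intro sum.cong) (auto simp: less_Suc_eq_le Suc_le_eq dest!: pl)
      finally show ?thesis by simp
    qed
    have t: "(\<Sum>j<d. p j + 1) = (\<Sum>j<d. p j) + d"
      by (simp add: sum.distrib del: Suc_eq_plus1 add: Suc_eq_plus1[symmetric] sum_Suc)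
    obtain d' where d': "d = Suc d'" using d by (cases d) auto
    obtain n' where n': "n = Suc n'" using n by (cases n) auto
    have gen: "(S + d = (d - 1) * n + 1 \<longleftrightarrow> n - 1 = T)" if "T + S = d * (n - 1)" for S T :: nat
    proof -
      have "T + S = n' + d' * n'" using that unfolding d' n' by simp
      moreover have "(d - 1) * n + 1 = d' * n' + d' + 1" unfolding d' n' by simp
      ultimately show ?thesis unfolding d' n' by auto
    qed
    show ?thesis using gen[OF s] t by simp
  qed
  have "theta d n u = (\<Sum>p\<in>{p\<in>P. (\<Sum>j<d. p j + 1) = (d - 1) * n + 1}. \<Prod>j<d. u j $ p j)"
    by (simp add: theta_def P_def)
  also have "\<dots> = (\<Sum>p\<in>P. if (\<Sum>j<d. p j + 1) = (d - 1) * n + 1 then (\<Prod>j<d. u j $ p j) else 0)"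
    using fin by (simp add: sum.inter_filter)
  also have "\<dots> = (\<Sum>p\<in>P. if n - 1 = (\<Sum>j<d. n - 1 - p j) then (\<Prod>j<d. u j $ p j) else 0)"
    using key by (intro sum.cong) auto
  finally show ?thesis using eq by simp
qed


lemma eqn_nth: "eqn n x y \<Longrightarrow> n \<ge> 1 \<Longrightarrow> fps_nth x (n - 1) = fps_nth y (n - 1)"
  by (simp add: eqn_def)

lemma nondeg:
  assumes "\<And>c. c \<in> carrier_vec n \<Longrightarrow> fps_nth (x * Fv n c) (n - 1) = fps_nth (y * Fv n c) (n - 1)"
  shows "eqn n x y"
  unfolding eqn_def
proof (intro allI impI)
  fix e assume e: "e < n"
  have "fps_nth (z * Fv n (Vf n (fps_X ^ (n - 1 - e)))) (n - 1) = fps_nth z e" for z :: "'a fps"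
  proof -
    have "fps_nth (z * Fv n (Vf n (fps_X ^ (n - 1 - e)))) (n - 1) = fps_nth (z * fps_X ^ (n - 1 - e)) (n - 1)"
      using e by (intro eqn_nth eqn_mult Fv_Vf) auto
    also have "\<dots> = fps_nth z e" using e by (simp add: fps_X_power_mult_right_nth)
    finally show ?thesis .
  qed
  then show "fps_nth x e = fps_nth y e" using assms[of "Vf n (fps_X ^ (n - 1 - e))"] by simp
qed

lemma theta_cong: "(\<And>j. j < d \<Longrightarrow> u j = u' j) \<Longrightarrow> theta d n u = theta d n u'"
  unfolding theta_def by (intro sum.cong refl prod.cong) auto

lemma dim_M[simp]: "dim_row (M n a) = n" "dim_col (M n a) = n" by (simp_all add: M_def)
lemma M_vec_carrier[simp]: "M n a *\<^sub>v v \<in> carrier_vec n"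
  unfolding carrier_vec_def by simp
lemma carrier_mat_vec[simp]: "f \<in> carrier_mat n n \<Longrightarrow> f *\<^sub>v v \<in> carrier_vec n"
  unfolding carrier_vec_def carrier_mat_def by simp

lemma prod_shift2: "(\<Prod>j<Suc (Suc m). g j) = g 0 * (g 1 * (\<Prod>j<m. g (Suc (Suc j)))) "
  by (simp add: prod.lessThan_Suc_shift del: prod.lessThan_Suc)

lemma args_upd: fixes k :: nat shows "u \<in> args d n \<Longrightarrow> x \<in> carrier_vec n \<Longrightarrow> u(k := x) \<in> args d n"
  by (auto simp: args_def)

lemma cent_M: assumes d: "d \<ge> 2" and n: "n \<ge> 1"
  shows "M n a \<in> cent d n"
proof -
  obtain m where m: "d = Suc (Suc m)" using d by (metis add_2_eq_Suc le_Suc_ex)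
  have "theta d n (u(0 := M n a *\<^sub>v u 0)) = theta d n (u(1 := M n a *\<^sub>v u 1))"
    if u: "u \<in> args d n" for u
  proof -
    have uc: "u j \<in> carrier_vec n" if "j < d" for j using u that by (simp add: args_def)
    define R where "R = (\<Prod>j<m. Fv n (u (Suc (Suc j))))"
    have "theta d n (u(0 := M n a *\<^sub>v u 0)) = fps_nth (\<Prod>j<d. Fv n ((u(0 := M n a *\<^sub>v u 0)) j)) (n - 1)"
      using u uc d n by (intro theta_fps args_upd) auto
    also have "\<dots> = fps_nth (Fv n (M n a *\<^sub>v u 0) * (Fv n (u 1) * R)) (n - 1)"
      unfolding m prod_shift2 by (simp add: R_def)
    also have "\<dots> = fps_nth ((a * Fv n (u 0)) * (Fv n (u 1) * R)) (n - 1)"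
      using uc d n by (intro eqn_nth eqn_mult) (auto simp: M_vec Fv_Vf)
    also have "\<dots> = fps_nth (Fv n (u 0) * ((a * Fv n (u 1)) * R)) (n - 1)"
      by (simp add: algebra_simps)
    also have "\<dots> = fps_nth (Fv n (u 0) * (Fv n (M n a *\<^sub>v u 1) * R)) (n - 1)"
      using uc d n by (intro eqn_nth eqn_mult) (auto simp: M_vec Fv_Vf eqn_sym)
    also have "\<dots> = fps_nth (\<Prod>j<d. Fv n ((u(1 := M n a *\<^sub>v u 1)) j)) (n - 1)"
      unfolding m prod_shift2 by (simp add: R_def)
    also have "\<dots> = theta d n (u(1 := M n a *\<^sub>v u 1))"
      using u uc d n by (intro theta_fps[symmetric] args_upd) auto
    finally show ?thesis .
  qed
  then show ?thesis by (simp add: cent_def)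
qed

lemma prod_shift3: "(\<Prod>j<Suc (Suc (Suc m)). g j) = g 0 * (g 1 * (g (Suc (Suc 0)) * (\<Prod>j<m. g (Suc (Suc (Suc j))))))"
  by (simp only: prod_shift2 prod.lessThan_Suc_shift One_nat_def)

lemma cent_char: fixes f :: "'a::field mat" assumes d: "d \<ge> 3" and n: "n \<ge> 1" and f: "f \<in> cent d n"
  shows "f = M n (Fv n (f *\<^sub>v Vf n 1))"
proof -
  obtain m where "d = 3 + m" using le_Suc_ex[OF d] by blast
  then have m: "d = Suc (Suc (Suc m))" by simp
  have fc: "f \<in> carrier_mat n n" using f by (simp add: cent_def)
  define a where "a = Fv n (f *\<^sub>v Vf n 1)"
  define R where "R = (\<Prod>j<m. Fv n (Vf n (1::'a fps)))"
  have "eqn n R (\<Prod>j<m. 1)" unfolding R_def by (rule eqn_prod) (rule Fv_Vf)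
  then have R: "eqn n R 1" by simp
  have fa: "f *\<^sub>v v = M n a *\<^sub>v v" if v: "v \<in> carrier_vec n" for v
  proof -
    have "eqn n (Fv n (f *\<^sub>v v)) (a * Fv n v)"
    proof (rule nondeg)
      fix c :: "'a vec" assume c: "c \<in> carrier_vec n"
      define u where "u = (\<lambda>j::nat. if j = 1 then v else if j = 2 then c else Vf n 1)"
      have u: "u \<in> args d n" using v c by (auto simp: u_def args_def)
      have e1: "theta d n (u(0 := f *\<^sub>v u 0)) = theta d n (u(1 := f *\<^sub>v u 1))"
        using f u by (simp add: cent_def)
      moreover have e2: "theta d n (u(0 := f *\<^sub>v u 0)) = fps_nth (\<Prod>j<d. Fv n ((u(0 := f *\<^sub>v u 0)) j)) (n - 1)"
        using u fc n d by (intro theta_fps args_upd) auto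
      moreover have e3: "(\<Prod>j<d. Fv n ((u(0 := f *\<^sub>v u 0)) j)) = a * (Fv n v * (Fv n c * R))"
        unfolding m prod_shift3 by (simp add: R_def u_def a_def numeral_2_eq_2)
      moreover have e4: "theta d n (u(1 := f *\<^sub>v u 1)) = fps_nth (\<Prod>j<d. Fv n ((u(1 := f *\<^sub>v u 1)) j)) (n - 1)"
        using u fc n d by (intro theta_fps args_upd) auto
      moreover have e5: "(\<Prod>j<d. Fv n ((u(1 := f *\<^sub>v u 1)) j)) = Fv n (Vf n 1) * (Fv n (f *\<^sub>v v) * (Fv n c * R))"
        unfolding m prod_shift3 by (simp add: R_def u_def numeral_2_eq_2)
      moreover have e6: "fps_nth (a * (Fv n v * (Fv n c * R))) (n - 1) = fps_nth ((a * Fv n v) * Fv n c) (n - 1)"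
      proof -
        have "fps_nth (a * (Fv n v * (Fv n c * R))) (n - 1) = fps_nth (a * (Fv n v * (Fv n c * 1))) (n - 1)"
          using R n by (intro eqn_nth eqn_mult) auto
        then show ?thesis by (simp add: mult.assoc)
      qed
      moreover have e7: "fps_nth (Fv n (Vf n 1) * (Fv n (f *\<^sub>v v) * (Fv n c * R))) (n - 1) = fps_nth (Fv n (f *\<^sub>v v) * Fv n c) (n - 1)"
      proof -
        have "fps_nth (Fv n (Vf n 1) * (Fv n (f *\<^sub>v v) * (Fv n c * R))) (n - 1) = fps_nth (1 * (Fv n (f *\<^sub>v v) * (Fv n c * 1))) (n - 1)"
          using R n by (intro eqn_nth eqn_mult) (auto simp: Fv_Vf)
        then show ?thesis by simp
      qed
      show "fps_nth (Fv n (f *\<^sub>v v) * Fv n c) (n - 1) = fps_nth ((a * Fv n v) * Fv n c) (n - 1)"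
        using e1 e2 e3 e4 e5 e6 e7 by metis
    qed
    then have "Vf n (Fv n (f *\<^sub>v v)) = Vf n (a * Fv n v)" by (rule Vf_eq)
    moreover have "f *\<^sub>v v = Vf n (Fv n (f *\<^sub>v v))" using Vf_Fv[OF carrier_mat_vec[OF fc]] by metis
    moreover have "M n a *\<^sub>v v = Vf n (a * Fv n v)" by (rule M_vec[OF v])
    ultimately show ?thesis by metis
  qed
  show ?thesis unfolding a_def[symmetric] by (rule mat_eq_vec[OF fc M_carrier], rule fa)
qed

lemma cent_eq: assumes "d \<ge> 3" "n \<ge> 1" shows "cent d n = range (M n :: 'a::field fps \<Rightarrow> 'a mat)"
proof (rule equalityI)
  show "cent d n \<subseteq> range (M n :: 'a fps \<Rightarrow> 'a mat)"
  proof
    fix f :: "'a mat" assume "f \<in> cent d n"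
    then have "f = M n (Fv n (f *\<^sub>v Vf n 1))" by (rule cent_char[OF assms])
    then show "f \<in> range (M n)" by blast
  qed
  show "range (M n :: 'a fps \<Rightarrow> 'a mat) \<subseteq> cent d n" using cent_M[of d n] assms by auto
qed


lemma theta_M: assumes u: "u \<in> args d n" and n: "n \<ge> 1" and d: "d \<ge> 1"
  shows "theta d n (\<lambda>j. M n w *\<^sub>v u j) = fps_nth (w ^ d * (\<Prod>j<d. Fv n (u j))) (n - 1)"
proof -
  have uc: "u j \<in> carrier_vec n" if "j < d" for j using u that by (simp add: args_def)
  have "theta d n (\<lambda>j. M n w *\<^sub>v u j) = fps_nth (\<Prod>j<d. Fv n (M n w *\<^sub>v u j)) (n - 1)"
    using n d by (intro theta_fps) (auto simp: args_def)
  also have "\<dots> = fps_nth (\<Prod>j<d. w * Fv n (u j)) (n - 1)"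
    using n uc by (intro eqn_nth eqn_prod) (auto simp: M_vec Fv_Vf)
  also have "(\<Prod>j<d. w * Fv n (u j)) = w ^ d * (\<Prod>j<d. Fv n (u j))"
    by (simp add: prod.distrib)
  finally show ?thesis .
qed

lemma orth_args: "\<sigma> \<in> carrier_mat n n \<Longrightarrow> u \<in> args d n \<Longrightarrow> (\<lambda>j. \<sigma> *\<^sub>v u j) \<in> args d n"
  by (auto simp: args_def)

lemma O_simps[simp]: "carrier (O_grp d n) = orth d n" "mult (O_grp d n) = (*)" "one (O_grp d n) = 1\<^sub>m n"
  by (simp_all add: O_grp_def)

lemma orth_carrier: "\<sigma> \<in> orth d n \<Longrightarrow> \<sigma> \<in> carrier_mat n n"
  by (simp add: orth_def)

lemma orth_theta: "\<sigma> \<in> orth d n \<Longrightarrow> u \<in> args d n \<Longrightarrow> theta d n (\<lambda>j. \<sigma> *\<^sub>v u j) = theta d n u"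
  by (simp add: orth_def)

lemma mat_inv_ex: fixes \<sigma> :: "'a::field mat"
  assumes sc: "\<sigma> \<in> carrier_mat n n" and inv: "invertible_mat \<sigma>"
  shows "\<exists>s'\<in>carrier_mat n n. \<sigma> * s' = 1\<^sub>m n \<and> s' * \<sigma> = 1\<^sub>m n"
proof -
  from inv obtain B where B1: "inverts_mat \<sigma> B" and B2: "inverts_mat B \<sigma>"
    unfolding invertible_mat_def by blast
  have e1: "\<sigma> * B = 1\<^sub>m n" using B1 sc unfolding inverts_mat_def by (simp add: carrier_matD)
  have e2: "B * \<sigma> = 1\<^sub>m (dim_row B)" using B2 unfolding inverts_mat_def .
  have "dim_col (B * \<sigma>) = n" using sc by (simp add: carrier_matD)
  then have r: "dim_row B = n" using e2 by simp
  have "dim_col (\<sigma> * B) = n" using e1 by simp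
  then have c: "dim_col B = n" by simp
  have "B \<in> carrier_mat n n" using r c by (intro carrier_matI)
  then show ?thesis using e1 e2 r by blast
qed

lemma invertible_of: fixes \<sigma> :: "'a::field mat"
  assumes "\<sigma> \<in> carrier_mat n n" "s' \<in> carrier_mat n n" "\<sigma> * s' = 1\<^sub>m n" "s' * \<sigma> = 1\<^sub>m n"
  shows "invertible_mat \<sigma>"
proof -
  have "inverts_mat \<sigma> s'" "inverts_mat s' \<sigma>" using assms unfolding inverts_mat_def by (simp_all add: carrier_matD)
  moreover have "square_mat \<sigma>" using assms(1) by (simp add: carrier_matD)
  ultimately show ?thesis unfolding invertible_mat_def by blast
qed

lemma orth_mult: assumes s: "\<sigma> \<in> orth d n" and t: "\<tau> \<in> orth d n"
  shows "\<sigma> * \<tau> \<in> orth d n"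
proof -
  have sc: "\<sigma> \<in> carrier_mat n n" and tc: "\<tau> \<in> carrier_mat n n" using s t by (auto simp: orth_def)
  obtain s' where s'c: "s' \<in> carrier_mat n n" and s': "\<sigma> * s' = 1\<^sub>m n" "s' * \<sigma> = 1\<^sub>m n"
    using mat_inv_ex[OF sc] s by (auto simp: orth_def)
  obtain t' where t'c: "t' \<in> carrier_mat n n" and t': "\<tau> * t' = 1\<^sub>m n" "t' * \<tau> = 1\<^sub>m n"
    using mat_inv_ex[OF tc] t by (auto simp: orth_def)
  have "(\<sigma> * \<tau>) * (t' * s') = \<sigma> * (\<tau> * (t' * s'))"
    using sc tc t'c s'c by (meson assoc_mult_mat mult_carrier_mat)
  also have "\<tau> * (t' * s') = (\<tau> * t') * s'"
    using tc t'c s'c by (meson assoc_mult_mat[symmetric])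
  finally have 1: "(\<sigma> * \<tau>) * (t' * s') = 1\<^sub>m n" using t' s' s'c by simp
  have "(t' * s') * (\<sigma> * \<tau>) = t' * (s' * (\<sigma> * \<tau>))"
    using sc tc t'c s'c by (meson assoc_mult_mat mult_carrier_mat)
  also have "s' * (\<sigma> * \<tau>) = (s' * \<sigma>) * \<tau>"
    using sc tc s'c by (meson assoc_mult_mat[symmetric])
  finally have 2: "(t' * s') * (\<sigma> * \<tau>) = 1\<^sub>m n" using t' s' tc by simp
  have "invertible_mat (\<sigma> * \<tau>)"
    by (rule invertible_of[OF _ _ 1 2]) (use sc tc s'c t'c in auto)
  moreover have "theta d n (\<lambda>j. (\<sigma> * \<tau>) *\<^sub>v u j) = theta d n u" if u: "u \<in> args d n" for u
  proof -
    have "theta d n (\<lambda>j. (\<sigma> * \<tau>) *\<^sub>v u j) = theta d n (\<lambda>j. \<sigma> *\<^sub>v (\<tau> *\<^sub>v u j))"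
      using u sc tc by (intro theta_cong) (auto simp: args_def)
    also have "\<dots> = theta d n (\<lambda>j. \<tau> *\<^sub>v u j)"
      using orth_theta[OF s orth_args[OF tc u]] by simp
    also have "\<dots> = theta d n u" using orth_theta[OF t u] .
    finally show ?thesis .
  qed
  ultimately show ?thesis using sc tc by (simp add: orth_def)
qed

lemma orth_one: "1\<^sub>m n \<in> orth d n"
proof -
  have "invertible_mat (1\<^sub>m n :: 'a::field mat)"
    by (rule invertible_of[of _ n "1\<^sub>m n"]) auto
  moreover have "theta d n (\<lambda>j. 1\<^sub>m n *\<^sub>v u j) = theta d n u" if "u \<in> args d n" for u :: "nat \<Rightarrow> 'a vec"
    using that by (intro theta_cong) (auto simp: args_def)
  ultimately show ?thesis by (simp add: orth_def)
qed

lemma orth_inv: assumes s: "\<sigma> \<in> orth d n"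
  shows "\<exists>\<tau>\<in>orth d n. \<tau> * \<sigma> = 1\<^sub>m n \<and> \<sigma> * \<tau> = 1\<^sub>m n"
proof -
  have sc: "\<sigma> \<in> carrier_mat n n" using s by (auto simp: orth_def)
  obtain s' where s'c: "s' \<in> carrier_mat n n" and s': "\<sigma> * s' = 1\<^sub>m n" and s'': "s' * \<sigma> = 1\<^sub>m n"
    using mat_inv_ex[OF sc] s by (auto simp: orth_def)
  have "invertible_mat s'" by (rule invertible_of[OF s'c sc s'' s'])
  moreover have "theta d n (\<lambda>j. s' *\<^sub>v u j) = theta d n u" if u: "u \<in> args d n" for u
  proof -
    have "theta d n (\<lambda>j. s' *\<^sub>v u j) = theta d n (\<lambda>j. \<sigma> *\<^sub>v (s' *\<^sub>v u j))"
      using orth_theta[OF s orth_args[OF s'c u]] by simp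
    also have "\<dots> = theta d n (\<lambda>j. (\<sigma> * s') *\<^sub>v u j)"
      using u sc s'c by (intro theta_cong) (auto simp: args_def)
    also have "\<dots> = theta d n u" using u s' by (intro theta_cong) (auto simp: args_def)
    finally show ?thesis .
  qed
  ultimately have "s' \<in> orth d n" using s'c by (simp add: orth_def)
  then show ?thesis using s' s'' by blast
qed

lemma group_O: "group (O_grp d n :: 'a::field mat monoid)"
proof (rule groupI)
  show "x \<otimes>\<^bsub>O_grp d n\<^esub> y \<in> carrier (O_grp d n)" if "x \<in> carrier (O_grp d n)" "y \<in> carrier (O_grp d n)" for x y :: "'a mat"
    using that orth_mult by simp
  show "\<one>\<^bsub>O_grp d n\<^esub> \<in> carrier (O_grp d n :: 'a mat monoid)" using orth_one by simp
  show "x \<otimes>\<^bsub>O_grp d n\<^esub> y \<otimes>\<^bsub>O_grp d n\<^esub> z = x \<otimes>\<^bsub>O_grp d n\<^esub> (y \<otimes>\<^bsub>O_grp d n\<^esub> z)"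
    if "x \<in> carrier (O_grp d n)" "y \<in> carrier (O_grp d n)" "z \<in> carrier (O_grp d n)" for x y z :: "'a mat"
    using that by (simp add: orth_carrier assoc_mult_mat[of _ n n _ n _ n])
  show "\<one>\<^bsub>O_grp d n\<^esub> \<otimes>\<^bsub>O_grp d n\<^esub> x = x" if "x \<in> carrier (O_grp d n)" for x :: "'a mat"
    using orth_carrier[OF that[simplified]] by simp
  show "\<exists>y\<in>carrier (O_grp d n). y \<otimes>\<^bsub>O_grp d n\<^esub> x = \<one>\<^bsub>O_grp d n\<^esub>" if "x \<in> carrier (O_grp d n)" for x :: "'a mat"
    using that orth_inv by fastforce
qed

lemma O_inv: assumes "\<sigma> \<in> orth d n"
  shows "inv\<^bsub>O_grp d n\<^esub> \<sigma> \<in> orth d n" "inv\<^bsub>O_grp d n\<^esub> \<sigma> * \<sigma> = 1\<^sub>m n" "\<sigma> * inv\<^bsub>O_grp d n\<^esub> \<sigma> = 1\<^sub>m n"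
  using group.inv_closed[OF group_O[of d n], of \<sigma>] group.l_inv[OF group_O[of d n], of \<sigma>] group.r_inv[OF group_O[of d n], of \<sigma>] assms
  by auto

lemma O_inv_eq: assumes "\<sigma> \<in> orth d n" "\<tau> \<in> orth d n" "\<tau> * \<sigma> = 1\<^sub>m n"
  shows "inv\<^bsub>O_grp d n\<^esub> \<sigma> = \<tau>"
  using group.inv_equality[OF group_O[of d n], of \<tau> \<sigma>] assms by auto


lemma cent_carrier: "f \<in> cent d n \<Longrightarrow> f \<in> carrier_mat n n"
  by (simp add: cent_def)

context
  fixes d n :: nat
  assumes d3: "d \<ge> 3" and n1: "n \<ge> 1"
begin

lemma cent_add: "f \<in> cent d n \<Longrightarrow> g \<in> cent d n \<Longrightarrow> f + g \<in> cent d n"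
  using cent_eq[OF d3 n1] M_add by (metis rangeE rangeI)
lemma cent_mult: "f \<in> cent d n \<Longrightarrow> g \<in> cent d n \<Longrightarrow> (f :: 'a::field mat) * g \<in> cent d n"
  using cent_eq[OF d3 n1] M_mult by (metis rangeE rangeI)
lemma cent_smult: "f \<in> cent d n \<Longrightarrow> (c::'a::field) \<cdot>\<^sub>m f \<in> cent d n"
  using cent_eq[OF d3 n1] M_smult by (metis rangeE rangeI)
lemma cent_one: "(1\<^sub>m n :: 'a::field mat) \<in> cent d n"
  using cent_eq[OF d3 n1] M_one by (metis rangeI)

lemma group_G: "group (G_grp d n :: ('a::field mat \<Rightarrow> 'a mat) monoid)"
proof -
  let ?C = "cent d n :: 'a mat set"
  have cent_add: "f + g \<in> ?C" if "f \<in> ?C" "g \<in> ?C" for f g using that by (rule cent_add)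
  have cent_mult: "f * g \<in> ?C" if "f \<in> ?C" "g \<in> ?C" for f g using that by (rule cent_mult)
  have cent_smult: "c \<cdot>\<^sub>m f \<in> ?C" if "f \<in> ?C" for f c using that by (rule cent_smult)
  have cent_one: "1\<^sub>m n \<in> ?C" by (rule cent_one)
  have img: "\<phi> f \<in> ?C" if "\<phi> \<in> algaut d n" "f \<in> ?C" for \<phi> f
    using that by (auto simp: algaut_def bij_betw_def)
  have closed: "restrict (\<phi> \<circ> \<psi>) ?C \<in> algaut d n" if p: "\<phi> \<in> algaut d n" and q: "\<psi> \<in> algaut d n" for \<phi> \<psi>
  proof -
    have b: "bij_betw (\<phi> \<circ> \<psi>) ?C ?C" using p q by (auto simp: algaut_def intro: bij_betw_trans)
    have "bij_betw (restrict (\<phi> \<circ> \<psi>) ?C) ?C ?C"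
      using b by (rule bij_betw_cong[THEN iffD1, rotated]) auto
    moreover have "\<forall>f\<in>?C. \<forall>g\<in>?C. restrict (\<phi> \<circ> \<psi>) ?C (f + g) = restrict (\<phi> \<circ> \<psi>) ?C f + restrict (\<phi> \<circ> \<psi>) ?C g
        \<and> restrict (\<phi> \<circ> \<psi>) ?C (f * g) = restrict (\<phi> \<circ> \<psi>) ?C f * restrict (\<phi> \<circ> \<psi>) ?C g"
    proof (intro ballI conjI)
      fix f g assume f: "f \<in> ?C" and g: "g \<in> ?C"
      have fg: "f + g \<in> ?C" "f * g \<in> ?C" using cent_add[OF f g] cent_mult[OF f g] .
      show "restrict (\<phi> \<circ> \<psi>) ?C (f + g) = restrict (\<phi> \<circ> \<psi>) ?C f + restrict (\<phi> \<circ> \<psi>) ?C g"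
        using p q img[OF q f] img[OF q g] f g fg by (auto simp: algaut_def)
      show "restrict (\<phi> \<circ> \<psi>) ?C (f * g) = restrict (\<phi> \<circ> \<psi>) ?C f * restrict (\<phi> \<circ> \<psi>) ?C g"
        using p q img[OF q f] img[OF q g] f g fg by (auto simp: algaut_def)
    qed
    moreover have "\<forall>c. \<forall>f\<in>?C. restrict (\<phi> \<circ> \<psi>) ?C (c \<cdot>\<^sub>m f) = c \<cdot>\<^sub>m restrict (\<phi> \<circ> \<psi>) ?C f"
      using p q img[OF q] cent_smult by (auto simp: algaut_def)
    moreover have "restrict (\<phi> \<circ> \<psi>) ?C (1\<^sub>m n) = 1\<^sub>m n"
      using p q cent_one by (auto simp: algaut_def)
    ultimately show ?thesis by (simp add: algaut_def)
  qed
  show ?thesis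
  proof (rule groupI)
    show "x \<otimes>\<^bsub>G_grp d n\<^esub> y \<in> carrier (G_grp d n)" if "x \<in> carrier (G_grp d n)" "y \<in> carrier (G_grp d n)" for x y :: "'a mat \<Rightarrow> 'a mat"
      using that closed by (simp add: G_grp_def)
    show "\<one>\<^bsub>G_grp d n\<^esub> \<in> carrier (G_grp d n :: ('a mat \<Rightarrow> 'a mat) monoid)"
    proof -
      have "bij_betw (restrict id ?C) ?C ?C"
        by (rule bij_betw_cong[THEN iffD1, rotated, OF bij_betw_id]) auto
      then show ?thesis using cent_add cent_mult cent_smult cent_one by (auto simp: G_grp_def algaut_def)
    qed
    show "x \<otimes>\<^bsub>G_grp d n\<^esub> y \<otimes>\<^bsub>G_grp d n\<^esub> z = x \<otimes>\<^bsub>G_grp d n\<^esub> (y \<otimes>\<^bsub>G_grp d n\<^esub> z)"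
      if "x \<in> carrier (G_grp d n)" "y \<in> carrier (G_grp d n)" "z \<in> carrier (G_grp d n)" for x y z :: "'a mat \<Rightarrow> 'a mat"
      using that img by (auto simp: G_grp_def restrict_def fun_eq_iff)
    show "\<one>\<^bsub>G_grp d n\<^esub> \<otimes>\<^bsub>G_grp d n\<^esub> x = x" if "x \<in> carrier (G_grp d n)" for x :: "'a mat \<Rightarrow> 'a mat"
    proof -
      have "x \<in> extensional ?C" using that by (simp add: G_grp_def algaut_def)
      then show ?thesis using that img by (auto simp: G_grp_def restrict_def fun_eq_iff extensional_def)
    qed
    show "\<exists>y\<in>carrier (G_grp d n). y \<otimes>\<^bsub>G_grp d n\<^esub> x = \<one>\<^bsub>G_grp d n\<^esub>" if "x \<in> carrier (G_grp d n)" for x :: "'a mat \<Rightarrow> 'a mat"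
    proof -
      have p: "x \<in> algaut d n" using that by (simp add: G_grp_def)
      then have b: "bij_betw x ?C ?C" by (simp add: algaut_def)
      define y where "y = restrict (inv_into ?C x) ?C"
      have yb: "bij_betw y ?C ?C" unfolding y_def
        by (rule bij_betw_cong[THEN iffD1, rotated, OF bij_betw_inv_into[OF b]]) auto
      have yin: "y f \<in> ?C" if "f \<in> ?C" for f using yb that by (auto simp: bij_betw_def)
      have xy: "x (y f) = f" if "f \<in> ?C" for f using b that by (simp add: y_def bij_betw_inv_into_right)
      have inj: "inj_on x ?C" using b by (simp add: bij_betw_def)
      have yx: "y (x f) = f" if "f \<in> ?C" for f using b that img[OF p that] by (simp add: y_def bij_betw_inv_into_left)
      have yeq: "y g = f" if "f \<in> ?C" "g \<in> ?C" "x f = g" for f g using that yx by auto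
      have "y \<in> algaut d n"
      proof -
        have "y (f + g) = y f + y g" if "f \<in> ?C" "g \<in> ?C" for f g
          using that yin xy p cent_add by (intro yeq) (auto simp: algaut_def)
        moreover have "y (f * g) = y f * y g" if "f \<in> ?C" "g \<in> ?C" for f g
          using that yin xy p cent_mult by (intro yeq) (auto simp: algaut_def)
        moreover have "y (c \<cdot>\<^sub>m f) = c \<cdot>\<^sub>m y f" if "f \<in> ?C" for f c
          using that yin xy p cent_smult by (intro yeq) (auto simp: algaut_def)
        moreover have "y (1\<^sub>m n) = 1\<^sub>m n" using p cent_one by (intro yeq) (auto simp: algaut_def)
        ultimately show ?thesis using yb by (auto simp: algaut_def y_def)
      qed
      moreover have "restrict (y \<circ> x) ?C = restrict id ?C"
        using yx by (auto simp: restrict_def fun_eq_iff)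
      ultimately show ?thesis by (auto simp: G_grp_def)
    qed
  qed
qed

end



lemma group_mu: assumes d: "d \<ge> 1" shows "group (mu_grp d :: 'a::field monoid)"
proof (rule groupI)
  have nz: "x \<noteq> 0" if "x ^ d = (1::'a)" for x using that d by (cases d) auto
  show "x \<otimes>\<^bsub>mu_grp d\<^esub> y \<in> carrier (mu_grp d)" if "x \<in> carrier (mu_grp d)" "y \<in> carrier (mu_grp d)" for x y :: 'a
    using that by (simp add: mu_grp_def power_mult_distrib)
  show "\<one>\<^bsub>mu_grp d\<^esub> \<in> carrier (mu_grp d :: 'a monoid)" by (simp add: mu_grp_def)
  show "x \<otimes>\<^bsub>mu_grp d\<^esub> y \<otimes>\<^bsub>mu_grp d\<^esub> z = x \<otimes>\<^bsub>mu_grp d\<^esub> (y \<otimes>\<^bsub>mu_grp d\<^esub> z)" for x y z :: 'a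
    by (simp add: mu_grp_def mult.assoc)
  show "\<one>\<^bsub>mu_grp d\<^esub> \<otimes>\<^bsub>mu_grp d\<^esub> x = x" for x :: 'a by (simp add: mu_grp_def)
  show "\<exists>y\<in>carrier (mu_grp d). y \<otimes>\<^bsub>mu_grp d\<^esub> x = \<one>\<^bsub>mu_grp d\<^esub>" if "x \<in> carrier (mu_grp d)" for x :: 'a
  proof -
    have x: "x ^ d = 1" using that by (simp add: mu_grp_def)
    have "inverse x ^ d = 1" using x by (simp add: power_inverse)
    moreover have "inverse x * x = 1" using nz[OF x] by simp
    ultimately show ?thesis by (auto simp: mu_grp_def)
  qed
qed

lemma iota_M: "iota n \<zeta> = M n (fps_const \<zeta>)"
proof -
  have "M n (fps_const \<zeta> * 1) = \<zeta> \<cdot>\<^sub>m M n 1" by (rule M_smult)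
  then show ?thesis by (simp add: iota_def M_one)
qed

lemma iota_orth: assumes z: "\<zeta> ^ d = 1" and d: "d \<ge> 1" and n: "n \<ge> 1"
  shows "iota n \<zeta> \<in> orth d n"
proof -
  have nz: "\<zeta> \<noteq> 0" using z d by (cases d) auto
  have "M n (fps_const \<zeta>) * M n (fps_const (inverse \<zeta>)) = 1\<^sub>m n"
    using nz by (simp add: M_mult M_one)
  moreover have "M n (fps_const (inverse \<zeta>)) * M n (fps_const \<zeta>) = 1\<^sub>m n"
    using nz by (simp add: M_mult M_one)
  ultimately have "invertible_mat (M n (fps_const \<zeta>))"
    by (intro invertible_of[of _ n "M n (fps_const (inverse \<zeta>))"]) auto
  moreover have "theta d n (\<lambda>j. M n (fps_const \<zeta>) *\<^sub>v u j) = theta d n u" if u: "u \<in> args d n" for u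
  proof -
    have "theta d n (\<lambda>j. M n (fps_const \<zeta>) *\<^sub>v u j) = fps_nth (fps_const \<zeta> ^ d * (\<Prod>j<d. Fv n (u j))) (n - 1)"
      by (rule theta_M[OF u n d])
    also have "fps_const \<zeta> ^ d = 1" using z by (simp add: fps_const_power)
    finally show ?thesis using theta_fps[OF u n d] by simp
  qed
  ultimately show ?thesis by (simp add: orth_def iota_M)
qed

lemma iota_mult: "iota n (\<zeta> * \<eta>) = iota n \<zeta> * iota n (\<eta> :: 'a::field)"
  by (simp add: iota_M M_mult fps_const_mult[symmetric] del: fps_const_mult)

lemma iota_inj: assumes "n \<ge> 1" "iota n \<zeta> = iota n (\<eta> :: 'a::field)" shows "\<zeta> = \<eta>"
proof -
  have "iota n \<zeta> $$ (0,0) = iota n \<eta> $$ (0,0)" using assms by simp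
  then show ?thesis using assms by (simp add: iota_def)
qed

lemma conj_props:
  fixes \<sigma> \<tau> :: "'a::field mat"
  assumes sc: "\<sigma> \<in> carrier_mat n n" and tc: "\<tau> \<in> carrier_mat n n" and ts: "\<tau> * \<sigma> = 1\<^sub>m n"
    and f: "f \<in> carrier_mat n n" and g: "g \<in> carrier_mat n n"
  shows "\<sigma> * (f + g) * \<tau> = \<sigma> * f * \<tau> + \<sigma> * g * \<tau>"
    "\<sigma> * (f * g) * \<tau> = (\<sigma> * f * \<tau>) * (\<sigma> * g * \<tau>)"
    "\<sigma> * (c \<cdot>\<^sub>m f) * \<tau> = c \<cdot>\<^sub>m (\<sigma> * f * \<tau>)"
proof -
  show "\<sigma> * (f + g) * \<tau> = \<sigma> * f * \<tau> + \<sigma> * g * \<tau>"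
    using sc tc f g by (simp add: mult_add_distrib_mat[of _ n n] add_mult_distrib_mat[of _ n n])
  have "(\<sigma> * f * \<tau>) * (\<sigma> * g * \<tau>) = \<sigma> * f * (\<tau> * \<sigma>) * g * \<tau>"
    using sc tc f g by (simp add: assoc_mult_mat[of _ n n _ n _ n])
  also have "\<dots> = \<sigma> * (f * g) * \<tau>" using ts sc tc f g by (simp add: assoc_mult_mat[of _ n n _ n _ n])
  finally show "\<sigma> * (f * g) * \<tau> = (\<sigma> * f * \<tau>) * (\<sigma> * g * \<tau>)" by simp
  show "\<sigma> * (c \<cdot>\<^sub>m f) * \<tau> = c \<cdot>\<^sub>m (\<sigma> * f * \<tau>)"
    using sc tc f by (simp add: mult_smult_distrib[of _ n n] mult_smult_assoc_mat[of _ n n])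
qed

lemma conj_cent: assumes s: "\<sigma> \<in> orth d n" and f: "f \<in> cent d n"
  shows "\<sigma> * f * inv\<^bsub>O_grp d n\<^esub> \<sigma> \<in> cent d n"
proof -
  let ?t = "inv\<^bsub>O_grp d n\<^esub> \<sigma>"
  have t: "?t \<in> orth d n" and st: "\<sigma> * ?t = 1\<^sub>m n" using O_inv[OF s] by auto
  have sc: "\<sigma> \<in> carrier_mat n n" and tc: "?t \<in> carrier_mat n n" using s t orth_carrier by auto
  have fc: "f \<in> carrier_mat n n" using f cent_carrier by auto
  have "theta d n (u(0 := (\<sigma> * f * ?t) *\<^sub>v u 0)) = theta d n (u(1 := (\<sigma> * f * ?t) *\<^sub>v u 1))"
    if u: "u \<in> args d n" for u
  proof -
    define w where "w = (\<lambda>j. ?t *\<^sub>v u j)"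
    have w: "w \<in> args d n" unfolding w_def by (rule orth_args[OF tc u])
    have uc: "u j \<in> carrier_vec n" if "j < d" for j using u that by (simp add: args_def)
    have bk: "\<sigma> *\<^sub>v w j = u j" if "j < d" for j
      using uc[OF that] sc tc st by (simp add: w_def assoc_mult_mat_vec[of _ n n _ n, symmetric])
    have fw: "(\<sigma> * f * ?t) *\<^sub>v u j = \<sigma> *\<^sub>v (f *\<^sub>v w j)" if "j < d" for j
      using uc[OF that] sc tc fc by (simp add: w_def assoc_mult_mat_vec[of _ n n _ n])
    have "theta d n (u(0 := (\<sigma> * f * ?t) *\<^sub>v u 0)) = theta d n (\<lambda>j. \<sigma> *\<^sub>v ((w(0 := f *\<^sub>v w 0)) j))"
      using bk fw by (intro theta_cong) auto
    also have "\<dots> = theta d n (w(0 := f *\<^sub>v w 0))"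
      using w fc by (intro orth_theta[OF s] args_upd) (auto simp: args_def)
    also have "\<dots> = theta d n (w(1 := f *\<^sub>v w 1))" using f w by (simp add: cent_def)
    also have "\<dots> = theta d n (\<lambda>j. \<sigma> *\<^sub>v ((w(1 := f *\<^sub>v w 1)) j))"
      using w fc by (intro orth_theta[OF s, symmetric] args_upd) (auto simp: args_def)
    also have "\<dots> = theta d n (u(1 := (\<sigma> * f * ?t) *\<^sub>v u 1))"
      using bk fw by (intro theta_cong) auto
    finally show ?thesis .
  qed
  moreover have "\<sigma> * f * ?t \<in> carrier_mat n n" using sc fc tc by auto
  ultimately show ?thesis by (simp add: cent_def)
qed


lemma binom2: "\<exists>r. (c + y) ^ k = c ^ k + of_nat k * c ^ (k - 1) * y + y ^ 2 * (r :: 'a::comm_ring_1)"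
proof (induction k)
  case 0 then show ?case by (intro exI[of _ 0]) simp
next
  case (Suc k)
  then obtain r where r: "(c + y) ^ k = c ^ k + of_nat k * c ^ (k - 1) * y + y ^ 2 * r" by blast
  have ck: "of_nat k * c ^ (k - 1) * c = of_nat k * c ^ k"
    by (cases k) (auto simp: algebra_simps)
  have "(c + y) ^ Suc k = (c + y) * (c ^ k + of_nat k * c ^ (k - 1) * y + y ^ 2 * r)" using r by simp
  also have "\<dots> = c ^ Suc k + of_nat (Suc k) * c ^ k * y + y ^ 2 * (c * r + of_nat k * c ^ (k - 1) + y * r)"
    using ck by (simp add: algebra_simps power2_eq_square)
  finally show ?case by auto
qed

lemma y2_nth: assumes "\<forall>i<e. fps_nth y i = 0" "fps_nth y 0 = 0"
  shows "fps_nth (y ^ 2 * r) e = 0"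
proof -
  have "y ^ 2 * r = y * (y * r)" by (simp add: power2_eq_square mult.assoc)
  moreover have "fps_nth (y * (y * r)) e = 0"
  proof -
    have yr: "fps_nth (y * r) 0 = 0" using assms by simp
    have "fps_nth (y * (y * r)) e = (\<Sum>i=0..e. fps_nth y i * fps_nth (y * r) (e - i))"
      by (rule fps_mult_nth)
    also have "\<dots> = 0"
    proof (rule sum.neutral, intro ballI)
      fix i assume "i \<in> {0..e}"
      then have "i < e \<or> i = e" by auto
      then show "fps_nth y i * fps_nth (y * r) (e - i) = 0" using assms yr by auto
    qed
    finally show ?thesis .
  qed
  ultimately show ?thesis by simp
qed

lemma root_unity_fps:
  fixes w :: "'a::field_char_0 fps"
  assumes w: "eqn n (w ^ d) 1" and d: "d \<ge> 1" and n: "n \<ge> 1"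
  shows "\<exists>\<zeta>. \<zeta> ^ d = 1 \<and> eqn n w (fps_const \<zeta>)"
proof -
  define \<zeta> where "\<zeta> = fps_nth w 0"
  have "fps_nth (w ^ d) 0 = fps_nth 1 0" using w n unfolding eqn_def by auto
  then have z: "\<zeta> ^ d = 1" unfolding \<zeta>_def by (simp add: fps_power_zeroth)
  have nz: "\<zeta> \<noteq> 0" using z d by (cases d) auto
  have "eqn n w (fps_const \<zeta>)"
  proof (rule ccontr)
    assume "\<not> eqn n w (fps_const \<zeta>)"
    define y where "y = w - fps_const \<zeta>"
    obtain e0 where e0: "e0 < n" "fps_nth w e0 \<noteq> fps_nth (fps_const \<zeta>) e0"
      using \<open>\<not> eqn n w (fps_const \<zeta>)\<close> unfolding eqn_def by blast
    have "fps_nth y e0 \<noteq> 0" using e0(2) unfolding y_def fps_sub_nth by simp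
    then have ex: "\<exists>e. e < n \<and> fps_nth y e \<noteq> 0" using e0(1) by blast
    define e where "e = (LEAST e. fps_nth y e \<noteq> 0)"
    have ye: "fps_nth y e \<noteq> 0" unfolding e_def by (rule LeastI[of _ e0]) fact
    have "e \<le> e0" unfolding e_def by (rule Least_le) fact
    then have en: "e < n" using e0(1) by simp
    have below: "\<forall>i<e. fps_nth y i = 0" unfolding e_def using not_less_Least by blast
    have y0: "fps_nth y 0 = 0" by (simp add: y_def \<zeta>_def)
    have e1: "e \<ge> 1" using ye y0 by (cases e) auto
    obtain r where r: "(fps_const \<zeta> + y) ^ d = fps_const \<zeta> ^ d + of_nat d * fps_const \<zeta> ^ (d - 1) * y + y ^ 2 * r"
      using binom2 by blast
    have "fps_const \<zeta> + y = w" by (simp add: y_def)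
    then have "fps_nth (w ^ d) e = fps_nth (fps_const (\<zeta> ^ d)) e + fps_nth (fps_const (of_nat d * \<zeta> ^ (d - 1)) * y) e + fps_nth (y ^ 2 * r) e"
      using r by (simp add: fps_const_power fps_of_nat[symmetric] fps_const_mult[symmetric] del: fps_const_mult)
    also have "\<dots> = of_nat d * \<zeta> ^ (d - 1) * fps_nth y e"
      using e1 y2_nth[OF below y0] by simp
    finally have "fps_nth (w ^ d) e = of_nat d * \<zeta> ^ (d - 1) * fps_nth y e" .
    moreover have "fps_nth (w ^ d) e = 0" using w en e1 unfolding eqn_def by auto
    ultimately have "of_nat d * \<zeta> ^ (d - 1) * fps_nth y e = 0" by simp
    then show False using ye nz d by auto
  qed
  then show ?thesis using z by blast
qed


lemma chi_apply: "f \<in> cent d n \<Longrightarrow> chi d n \<sigma> f = \<sigma> * f * inv\<^bsub>O_grp d n\<^esub> \<sigma>"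
  by (simp add: chi_def)

lemma conj_back:
  fixes \<sigma> \<tau> f :: "'a::field mat"
  assumes sc: "\<sigma> \<in> carrier_mat n n" and tc: "\<tau> \<in> carrier_mat n n" and ts: "\<tau> * \<sigma> = 1\<^sub>m n"
    and f: "f \<in> carrier_mat n n"
  shows "\<tau> * (\<sigma> * f * \<tau>) * \<sigma> = f"
proof -
  have "\<tau> * (\<sigma> * f * \<tau>) * \<sigma> = (\<tau> * \<sigma>) * f * (\<tau> * \<sigma>)"
    using sc tc f by (simp add: assoc_mult_mat[of _ n n _ n _ n])
  then show ?thesis using ts f by simp
qed

lemma chi_algaut: assumes d3: "d \<ge> 3" and n1: "n \<ge> 1" and s: "\<sigma> \<in> orth d n"
  shows "chi d n (\<sigma> :: 'a::field mat) \<in> algaut d n"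
proof -
  let ?C = "cent d n :: 'a mat set"
  let ?t = "inv\<^bsub>O_grp d n\<^esub> \<sigma>"
  have t: "?t \<in> orth d n" and ts: "?t * \<sigma> = 1\<^sub>m n" and st: "\<sigma> * ?t = 1\<^sub>m n" using O_inv[OF s] by auto
  have sc: "\<sigma> \<in> carrier_mat n n" and tc: "?t \<in> carrier_mat n n" using s t orth_carrier by auto
  have tt: "inv\<^bsub>O_grp d n\<^esub> ?t = \<sigma>" using group.inv_inv[OF group_O s[simplified O_simps(1)[symmetric]]] .
  have cadd: "f + g \<in> ?C" if "f \<in> ?C" "g \<in> ?C" for f g using that by (rule cent_add[OF d3 n1])
  have cmult: "f * g \<in> ?C" if "f \<in> ?C" "g \<in> ?C" for f g using that by (rule cent_mult[OF d3 n1])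
  have csmult: "c \<cdot>\<^sub>m f \<in> ?C" if "f \<in> ?C" for f c using that by (rule cent_smult[OF d3 n1])
  have cone: "1\<^sub>m n \<in> ?C" by (rule cent_one[OF d3 n1])
  have cc: "f \<in> carrier_mat n n" if "f \<in> ?C" for f using that by (rule cent_carrier)
  have img: "\<sigma> * f * ?t \<in> ?C" if "f \<in> ?C" for f using conj_cent[OF s that] .
  have img2: "?t * f * \<sigma> \<in> ?C" if "f \<in> ?C" for f using conj_cent[OF t that] tt by simp
  have bij: "bij_betw (chi d n \<sigma>) ?C ?C"
  proof (rule bij_betwI[where g = "\<lambda>f. ?t * f * \<sigma>"])
    show "chi d n \<sigma> \<in> ?C \<rightarrow> ?C" using img by (auto simp: chi_apply)
    show "(\<lambda>f. ?t * f * \<sigma>) \<in> ?C \<rightarrow> ?C" using img2 by auto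
    show "?t * chi d n \<sigma> x * \<sigma> = x" if "x \<in> ?C" for x
      using that conj_back[OF sc tc ts cc[OF that]] by (simp add: chi_apply)
    show "chi d n \<sigma> (?t * y * \<sigma>) = y" if "y \<in> ?C" for y
      using img2[OF that] conj_back[OF tc sc st cc[OF that]] by (simp add: chi_apply)
  qed
  have "chi d n \<sigma> (f + g) = chi d n \<sigma> f + chi d n \<sigma> g \<and> chi d n \<sigma> (f * g) = chi d n \<sigma> f * chi d n \<sigma> g"
    if "f \<in> ?C" "g \<in> ?C" for f g
    using that cadd[OF that] cmult[OF that] conj_props[OF sc tc ts cc[OF that(1)] cc[OF that(2)]]
    by (simp add: chi_apply)
  moreover have "chi d n \<sigma> (c \<cdot>\<^sub>m f) = c \<cdot>\<^sub>m chi d n \<sigma> f" if "f \<in> ?C" for f c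
    using that csmult[OF that] conj_props(3)[OF sc tc ts cc[OF that] cc[OF that]]
    by (simp add: chi_apply)
  moreover have "chi d n \<sigma> (1\<^sub>m n) = 1\<^sub>m n" using cone st sc by (simp add: chi_apply)
  ultimately show ?thesis using bij by (simp add: algaut_def chi_def)
qed

lemma chi_mult: assumes s: "\<sigma> \<in> orth d n" and t: "\<tau> \<in> orth d n"
  shows "chi d n (\<sigma> * \<tau> :: 'a::field mat) = restrict (chi d n \<sigma> \<circ> chi d n \<tau>) (cent d n)"
proof (rule ext)
  fix f :: "'a mat"
  show "chi d n (\<sigma> * \<tau>) f = restrict (chi d n \<sigma> \<circ> chi d n \<tau>) (cent d n) f"
  proof (cases "f \<in> cent d n")
    case True
    have inv: "inv\<^bsub>O_grp d n\<^esub> (\<sigma> * \<tau>) = inv\<^bsub>O_grp d n\<^esub> \<tau> * inv\<^bsub>O_grp d n\<^esub> \<sigma>"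
      using group.inv_mult_group[OF group_O[of d n], of \<sigma> \<tau>] s t by simp
    have c: "\<sigma> \<in> carrier_mat n n" "\<tau> \<in> carrier_mat n n" "inv\<^bsub>O_grp d n\<^esub> \<tau> \<in> carrier_mat n n"
      "inv\<^bsub>O_grp d n\<^esub> \<sigma> \<in> carrier_mat n n" "f \<in> carrier_mat n n"
      using orth_carrier[OF s] orth_carrier[OF t] orth_carrier[OF O_inv(1)[OF t]]
        orth_carrier[OF O_inv(1)[OF s]] cent_carrier[OF True] by auto
    have "chi d n (\<sigma> * \<tau>) f = \<sigma> * \<tau> * f * (inv\<^bsub>O_grp d n\<^esub> \<tau> * inv\<^bsub>O_grp d n\<^esub> \<sigma>)"
      using True inv by (simp add: chi_apply)
    also have "\<dots> = \<sigma> * (\<tau> * f * inv\<^bsub>O_grp d n\<^esub> \<tau>) * inv\<^bsub>O_grp d n\<^esub> \<sigma>"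
      using c by (simp add: assoc_mult_mat[of _ n n _ n _ n])
    also have "\<dots> = restrict (chi d n \<sigma> \<circ> chi d n \<tau>) (cent d n) f"
      using True conj_cent[OF t True] by (simp add: chi_apply)
    finally show ?thesis .
  next
    case False
    then show ?thesis by (simp add: chi_def)
  qed
qed


lemma iota_kernel: assumes d3: "d \<ge> 3" and n1: "n \<ge> 1" and z: "\<zeta> ^ d = (1::'a::field)"
  shows "iota n \<zeta> \<in> orth d n \<and> chi d n (iota n \<zeta>) = restrict id (cent d n)"
proof -
  have d1: "d \<ge> 1" using d3 by simp
  have nz: "\<zeta> \<noteq> 0" using z d1 by (cases d) auto
  have o1: "iota n \<zeta> \<in> orth d n" by (rule iota_orth[OF z d1 n1])
  have o2: "iota n (inverse \<zeta>) \<in> orth d n" using z by (intro iota_orth[OF _ d1 n1]) (simp add: power_inverse)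
  have "iota n (inverse \<zeta>) * iota n \<zeta> = iota n (inverse \<zeta> * \<zeta>)" by (rule iota_mult[symmetric])
  also have "\<dots> = 1\<^sub>m n" using nz by (simp add: iota_M M_one)
  finally have "iota n (inverse \<zeta>) * iota n \<zeta> = 1\<^sub>m n" .
  then have inv: "inv\<^bsub>O_grp d n\<^esub> (iota n \<zeta>) = iota n (inverse \<zeta>)" by (rule O_inv_eq[OF o1 o2])
  have "chi d n (iota n \<zeta>) f = restrict id (cent d n) f" for f
  proof (cases "f \<in> cent d n")
    case True
    then obtain a where a: "f = M n a" using cent_eq[OF d3 n1] by auto
    have "chi d n (iota n \<zeta>) f = M n (fps_const \<zeta> * a * fps_const (inverse \<zeta>))"
    proof -
      have inv': "inv\<^bsub>O_grp d n\<^esub> (M n (fps_const \<zeta>)) = M n (fps_const (inverse \<zeta>))"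
        using inv by (simp add: iota_M)
      show ?thesis using True by (simp add: chi_apply iota_M inv' a M_mult)
    qed
    also have "fps_const \<zeta> * a * fps_const (inverse \<zeta>) = a"
      using nz by (simp add: ac_simps fps_const_mult)
    finally show ?thesis using True a by simp
  next
    case False then show ?thesis by (simp add: chi_def)
  qed
  then show ?thesis using o1 by auto
qed

lemma kernel_iota: assumes d3: "d \<ge> 3" and n1: "n \<ge> 1" and s: "\<sigma> \<in> orth d n"
  and k: "chi d n \<sigma> = restrict id (cent d n)"
  shows "\<exists>\<zeta>. \<zeta> ^ d = (1::'a::field_char_0) \<and> \<sigma> = iota n \<zeta>"
proof -
  have d1: "d \<ge> 1" using d3 by simp
  let ?t = "inv\<^bsub>O_grp d n\<^esub> \<sigma>"
  have t: "?t \<in> orth d n" and ts: "?t * \<sigma> = 1\<^sub>m n" using O_inv[OF s] by auto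
  have sc: "\<sigma> \<in> carrier_mat n n" and tc: "?t \<in> carrier_mat n n" using s t orth_carrier by auto
  have comm: "\<sigma> * M n a = M n a * \<sigma>" for a
  proof -
    have Ma: "M n a \<in> cent d n" using cent_M[of d n a] d3 n1 by simp
    have "\<sigma> * M n a * ?t = M n a" using fun_cong[OF k, of "M n a"] Ma by (simp add: chi_apply)
    then have "\<sigma> * M n a * ?t * \<sigma> = M n a * \<sigma>" by simp
    moreover have "\<sigma> * M n a * ?t * \<sigma> = \<sigma> * M n a * (?t * \<sigma>)"
      by (rule assoc_mult_mat[of _ n n _ n _ n]) (use sc tc in auto)
    ultimately show ?thesis using ts sc by simp
  qed
  define w where "w = Fv n (\<sigma> *\<^sub>v Vf n 1)"
  have sw: "\<sigma> = M n w"
  proof (rule mat_eq_vec[OF sc M_carrier])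
    fix v :: "'a vec" assume v: "v \<in> carrier_vec n"
    have "\<sigma> *\<^sub>v v = \<sigma> *\<^sub>v (M n (Fv n v) *\<^sub>v Vf n 1)" using M_Vf1 Vf_Fv[OF v] by metis
    also have "\<dots> = (\<sigma> * M n (Fv n v)) *\<^sub>v Vf n 1"
      using sc by (simp add: assoc_mult_mat_vec[of _ n n _ n])
    also have "\<dots> = M n (Fv n v) *\<^sub>v (\<sigma> *\<^sub>v Vf n 1)"
      using sc by (simp add: comm assoc_mult_mat_vec[of _ n n _ n])
    also have "\<dots> = Vf n (w * Fv n v)" using sc by (simp add: M_vec w_def mult.commute)
    also have "\<dots> = M n w *\<^sub>v v" using v by (simp add: M_vec)
    finally show "\<sigma> *\<^sub>v v = M n w *\<^sub>v v" .
  qed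
  have "eqn n (w ^ d) 1"
  proof (rule nondeg)
    fix v :: "'a vec" assume v: "v \<in> carrier_vec n"
    define u where "u = (\<lambda>j::nat. if j = 0 then v else Vf n 1)"
    have u: "u \<in> args d n" using v by (auto simp: u_def args_def)
    obtain m where m: "d = Suc m" using d1 by (cases d) auto
    have P: "eqn n (\<Prod>j<d. Fv n (u j)) (Fv n v * 1)"
    proof -
      have p1: "(\<Prod>j<d. Fv n (u j)) = Fv n v * (\<Prod>j<m. Fv n (Vf n 1))"
        unfolding m by (simp add: prod.lessThan_Suc_shift del: prod.lessThan_Suc add: u_def)
      have "eqn n (\<Prod>j<m. Fv n (Vf n (1 :: 'a fps))) (\<Prod>j<m. 1)" by (rule eqn_prod) (rule Fv_Vf)
      then have p2: "eqn n (\<Prod>j<m. Fv n (Vf n (1 :: 'a fps))) 1" by simp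
      show ?thesis unfolding p1 by (rule eqn_mult[OF eqn_refl p2])
    qed
    have "fps_nth (w ^ d * Fv n v) (n - 1) = fps_nth (w ^ d * (\<Prod>j<d. Fv n (u j))) (n - 1)"
      using P n1 by (intro eqn_nth eqn_mult) (auto simp: eqn_sym)
    also have "\<dots> = theta d n (\<lambda>j. M n w *\<^sub>v u j)" using theta_M[OF u n1 d1] by simp
    also have "\<dots> = theta d n u" using orth_theta[OF s u] sw by simp
    also have "\<dots> = fps_nth (\<Prod>j<d. Fv n (u j)) (n - 1)" by (rule theta_fps[OF u n1 d1])
    also have "\<dots> = fps_nth (1 * Fv n v) (n - 1)" using eqn_nth[OF P n1] by simp
    finally show "fps_nth (w ^ d * Fv n v) (n - 1) = fps_nth (1 * Fv n v) (n - 1)" .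
  qed
  then obtain \<zeta> where z: "\<zeta> ^ d = 1" and wz: "eqn n w (fps_const \<zeta>)"
    using root_unity_fps[OF _ d1 n1] by blast
  have "\<sigma> = iota n \<zeta>" using sw M_eq[OF wz] by (simp add: iota_M)
  then show ?thesis using z by blast
qed


definition Phi :: "nat \<Rightarrow> ('a::field mat \<Rightarrow> 'a mat) \<Rightarrow> 'a fps \<Rightarrow> 'a fps" where
  "Phi n \<phi> a = Fv n (\<phi> (M n a) *\<^sub>v Vf n 1)"

lemma compose_eqn: assumes "fps_nth g 0 = 0" "eqn n a b" shows "eqn n (a oo g) (b oo g)"
  using assms unfolding eqn_def fps_compose_nth by (auto intro!: sum.cong)

lemma compose_sum: assumes g0: "fps_nth g 0 = 0" and k: "k < n"
  shows "fps_nth (a oo g) k = fps_nth (\<Sum>e<n. fps_const (fps_nth a e) * g ^ e) k"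
proof -
  have "fps_nth (\<Sum>e<n. fps_const (fps_nth a e) * g ^ e) k = (\<Sum>e<n. fps_nth a e * fps_nth (g ^ e) k)"
    by (simp add: fps_sum_nth)
  also have "\<dots> = (\<Sum>e\<in>{0..k}. fps_nth a e * fps_nth (g ^ e) k)"
  proof (rule sum.mono_neutral_right)
    show "{0..k} \<subseteq> {..<n}" using k by auto
    show "\<forall>i\<in>{..<n} - {0..k}. fps_nth a i * fps_nth (g ^ i) k = 0"
      using startsby_zero_power_prefix[OF g0] by auto
  qed auto
  finally show ?thesis by (simp add: fps_compose_nth)
qed

context
  fixes d n :: nat and \<phi> :: "'a::field mat \<Rightarrow> 'a mat"
  assumes d3: "d \<ge> 3" and n2: "n \<ge> 2" and phi: "\<phi> \<in> algaut d n"
begin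

lemma n1: "n \<ge> 1" using n2 by simp

lemma Mcent: "M n a \<in> cent d n" using cent_M[of d n a] d3 n1 by simp

lemma phi_cent: "f \<in> cent d n \<Longrightarrow> \<phi> f \<in> cent d n"
  using phi by (auto simp: algaut_def bij_betw_def)

lemma phi_M: "\<phi> (M n a) = M n (Phi n \<phi> a)"
  unfolding Phi_def by (rule cent_char[OF d3 n1 phi_cent[OF Mcent]])

lemma Phi_mult: "eqn n (Phi n \<phi> (a * b)) (Phi n \<phi> a * Phi n \<phi> b)"
proof (rule M_inj)
  have "M n (Phi n \<phi> (a * b)) = \<phi> (M n a * M n b)" by (simp add: phi_M M_mult)
  also have "\<dots> = \<phi> (M n a) * \<phi> (M n b)" using phi Mcent[of a] Mcent[of b] by (simp add: algaut_def)
  finally show "M n (Phi n \<phi> (a * b)) = M n (Phi n \<phi> a * Phi n \<phi> b)" by (simp add: phi_M M_mult)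
qed

lemma Phi_add: "eqn n (Phi n \<phi> (a + b)) (Phi n \<phi> a + Phi n \<phi> b)"
proof (rule M_inj)
  have "M n (Phi n \<phi> (a + b)) = \<phi> (M n a + M n b)" by (simp add: phi_M[symmetric] M_add)
  also have "\<dots> = \<phi> (M n a) + \<phi> (M n b)" using phi Mcent[of a] Mcent[of b] by (simp add: algaut_def)
  finally show "M n (Phi n \<phi> (a + b)) = M n (Phi n \<phi> a + Phi n \<phi> b)" by (simp add: phi_M M_add)
qed

lemma Phi_smult: "eqn n (Phi n \<phi> (fps_const c * a)) (fps_const c * Phi n \<phi> a)"
proof (rule M_inj)
  have "M n (Phi n \<phi> (fps_const c * a)) = \<phi> (c \<cdot>\<^sub>m M n a)" by (simp add: phi_M[symmetric] M_smult)
  also have "\<dots> = c \<cdot>\<^sub>m \<phi> (M n a)" using phi Mcent[of a] by (simp add: algaut_def)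
  finally show "M n (Phi n \<phi> (fps_const c * a)) = M n (fps_const c * Phi n \<phi> a)" by (simp add: phi_M M_smult)
qed

lemma Phi_one: "eqn n (Phi n \<phi> 1) 1"
proof (rule M_inj)
  show "M n (Phi n \<phi> 1) = M n 1" using phi by (simp add: phi_M[symmetric] M_one algaut_def)
qed

lemma Phi_cong: "eqn n a b \<Longrightarrow> Phi n \<phi> a = Phi n \<phi> b"
  unfolding Phi_def by (simp add: M_eq)

lemma Phi_zero: "eqn n (Phi n \<phi> 0) 0"
proof -
  have "\<forall>e<n. fps_nth (Phi n \<phi> (0 + 0)) e = fps_nth (Phi n \<phi> 0) e + fps_nth (Phi n \<phi> 0) e"
    using Phi_add[of 0 0] unfolding eqn_def fps_add_nth .
  then show ?thesis unfolding eqn_def fps_zero_nth add_0 by (metis add_cancel_right_right)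
qed

lemma Phi_sum: "eqn n (Phi n \<phi> (\<Sum>e\<in>S. fps_const (c e) * fps_X ^ e))
    (\<Sum>e\<in>S. fps_const (c e) * Phi n \<phi> fps_X ^ e)"
proof (induction S rule: infinite_finite_induct)
  case (infinite A) then show ?case using Phi_zero by simp
next
  case empty then show ?case using Phi_zero by simp
next
  case (insert x F)
  have pw: "eqn n (Phi n \<phi> (fps_X ^ k)) (Phi n \<phi> fps_X ^ k)" for k
  proof (induction k)
    case 0 then show ?case using Phi_one by simp
  next
    case (Suc k)
    have "eqn n (Phi n \<phi> (fps_X * fps_X ^ k)) (Phi n \<phi> fps_X * Phi n \<phi> (fps_X ^ k))" by (rule Phi_mult)
    moreover have "eqn n (Phi n \<phi> fps_X * Phi n \<phi> (fps_X ^ k)) (Phi n \<phi> fps_X * Phi n \<phi> fps_X ^ k)"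
      by (rule eqn_mult[OF eqn_refl Suc.IH])
    ultimately have "eqn n (Phi n \<phi> (fps_X * fps_X ^ k)) (Phi n \<phi> fps_X * Phi n \<phi> fps_X ^ k)" by (rule eqn_trans)
    then show ?case by simp
  qed
  have "eqn n (Phi n \<phi> (\<Sum>e\<in>insert x F. fps_const (c e) * fps_X ^ e))
      (Phi n \<phi> (fps_const (c x) * fps_X ^ x) + Phi n \<phi> (\<Sum>e\<in>F. fps_const (c e) * fps_X ^ e))"
    using insert Phi_add by simp
  moreover have "eqn n (Phi n \<phi> (fps_const (c x) * fps_X ^ x)) (fps_const (c x) * Phi n \<phi> fps_X ^ x)"
    using Phi_smult pw eqn_mult eqn_trans eqn_refl by metis
  ultimately have "eqn n (Phi n \<phi> (\<Sum>e\<in>insert x F. fps_const (c e) * fps_X ^ e))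
      (fps_const (c x) * Phi n \<phi> fps_X ^ x + (\<Sum>e\<in>F. fps_const (c e) * Phi n \<phi> fps_X ^ e))"
    using insert.IH by (blast intro: eqn_trans eqn_add)
  then show ?case using insert.hyps by simp
qed

lemma g0: "fps_nth (Phi n \<phi> fps_X) 0 = 0"
proof -
  let ?g = "Phi n \<phi> fps_X"
  have pw: "eqn n (Phi n \<phi> (fps_X ^ k)) (?g ^ k)" for k
  proof (induction k)
    case 0 then show ?case using Phi_one by simp
  next
    case (Suc k)
    have "eqn n (Phi n \<phi> (fps_X * fps_X ^ k)) (Phi n \<phi> fps_X * Phi n \<phi> (fps_X ^ k))" by (rule Phi_mult)
    moreover have "eqn n (Phi n \<phi> fps_X * Phi n \<phi> (fps_X ^ k)) (Phi n \<phi> fps_X * Phi n \<phi> fps_X ^ k)"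
      by (rule eqn_mult[OF eqn_refl Suc.IH])
    ultimately have "eqn n (Phi n \<phi> (fps_X * fps_X ^ k)) (Phi n \<phi> fps_X * Phi n \<phi> fps_X ^ k)" by (rule eqn_trans)
    then show ?case by simp
  qed
  have "eqn n (fps_X ^ n) (0 :: 'a fps)" by (simp add: eqn_def)
  then have "Phi n \<phi> (fps_X ^ n) = Phi n \<phi> 0" by (rule Phi_cong)
  then have "eqn n (?g ^ n) 0" using pw[of n] Phi_zero by (metis eqn_sym eqn_trans)
  then have "fps_nth (?g ^ n) 0 = 0" using n1 by (simp add: eqn_def)
  then show ?thesis by (simp add: fps_power_zeroth)
qed

lemma Phi_compose: "eqn n (Phi n \<phi> a) (a oo Phi n \<phi> fps_X)"
proof -
  let ?g = "Phi n \<phi> fps_X"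
  let ?s = "\<Sum>e<n. fps_const (fps_nth a e) * fps_X ^ e"
  have "eqn n a ?s" unfolding eqn_def by (auto simp: fps_sum_nth mult_delta_right sum.delta' cong: if_cong)
  then have "Phi n \<phi> a = Phi n \<phi> ?s" by (rule Phi_cong)
  moreover have "eqn n (Phi n \<phi> ?s) (\<Sum>e<n. fps_const (fps_nth a e) * ?g ^ e)" by (rule Phi_sum)
  moreover have "eqn n (\<Sum>e<n. fps_const (fps_nth a e) * ?g ^ e) (a oo ?g)"
    unfolding eqn_def using compose_sum[OF g0] by simp
  ultimately show ?thesis by (metis eqn_trans)
qed

lemma phi_M_compose: "\<phi> (M n a) = M n (a oo Phi n \<phi> fps_X)"
  using phi_M M_eq[OF Phi_compose] by simp

lemma g1: "fps_nth (Phi n \<phi> fps_X) 1 \<noteq> 0"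
proof -
  let ?g = "Phi n \<phi> fps_X"
  have "M n fps_X \<in> \<phi> ` cent d n" using phi Mcent[of fps_X] by (auto simp: algaut_def bij_betw_def)
  then obtain f where f: "f \<in> cent d n" "\<phi> f = M n fps_X" by (rule imageE) (rule that, simp_all)
  have "f \<in> range (M n)" using f(1) cent_eq[OF d3 n1, where 'a='a] by simp
  then obtain b where b: "f = M n b" by (rule rangeE) (rule that)
  have "M n (b oo ?g) = M n fps_X" using f b phi_M_compose by simp
  then have "eqn n (b oo ?g) fps_X" by (rule M_inj)
  then have "fps_nth (b oo ?g) 1 = 1" using n2 by (simp add: eqn_def)
  moreover have "fps_nth (b oo ?g) 1 = fps_nth b 1 * fps_nth ?g 1"
    using g0 by (simp add: fps_compose_nth)
  ultimately show ?thesis by auto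
qed

end



definition Ufps :: "nat \<Rightarrow> 'a::field fps \<Rightarrow> 'a fps" where
  "Ufps n h = Abs_fps (\<lambda>i. if i < n then fps_nth (h ^ (n - 1 - i)) (n - 1) else 0)"

lemma Ufps_prop: assumes "n \<ge> 1" shows "fps_nth (Ufps n h * c) (n - 1) = fps_nth (c oo h) (n - 1)"
proof -
  define f where "f = (\<lambda>i. fps_nth (h ^ i) (n - 1) * fps_nth c i)"
  have "fps_nth (Ufps n h * c) (n - 1) = (\<Sum>i=0..n - 1. f ((n - 1) + 0 - i))"
    unfolding fps_mult_nth f_def using assms by (intro sum.cong) (auto simp: Ufps_def)
  also have "\<dots> = (\<Sum>i=0..n - 1. f i)" by (rule sum.atLeastAtMost_rev[symmetric])
  also have "\<dots> = fps_nth (c oo h) (n - 1)" by (simp add: f_def fps_compose_nth mult.commute)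
  finally show ?thesis .
qed

lemma Ufps0: assumes "fps_nth h 0 = 0" "fps_nth h 1 \<noteq> 0" "n \<ge> 1"
  shows "fps_nth (Ufps n h) 0 \<noteq> 0"
  using assms by (simp add: Ufps_def startsby_zero_power_nth_same)

lemma fps_root: fixes U :: "'a::{field_char_0, alg_closed_field} fps"
  assumes U0: "fps_nth U 0 \<noteq> 0" and d: "d \<ge> 1"
  shows "\<exists>w. w ^ d = U \<and> fps_nth w 0 \<noteq> 0"
proof -
  obtain k where k: "d = Suc k" using d by (cases d) auto
  define r where "r = (\<lambda>(k::nat) (x::'a). SOME y. y ^ k = x)"
  have "\<exists>y. y ^ Suc k = fps_nth U 0" by (rule nth_root_exists) simp
  then have "r (Suc k) (fps_nth U 0) ^ Suc k = fps_nth U 0" unfolding r_def by (rule someI_ex)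
  then have e: "fps_radical r (Suc k) U ^ Suc k = U" using power_radical[OF U0] by blast
  moreover have "fps_nth (fps_radical r (Suc k) U) 0 \<noteq> 0"
  proof
    assume "fps_nth (fps_radical r (Suc k) U) 0 = 0"
    then have "fps_nth (fps_radical r (Suc k) U ^ Suc k) 0 = 0" by (simp only: fps_power_zeroth) simp
    then show False using U0 by (simp only: e)
  qed
  ultimately show ?thesis using k by blast
qed

definition sig :: "'a::field fps \<Rightarrow> 'a fps \<Rightarrow> 'a fps \<Rightarrow> 'a fps" where
  "sig g w b = w * (b oo g)"
definition tau :: "'a::field fps \<Rightarrow> 'a fps \<Rightarrow> 'a fps \<Rightarrow> 'a fps" where
  "tau h w c = (c * inverse w) oo h"

lemma cmult_compose: "(fps_const c * a) oo g = fps_const c * (a oo g)"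
  by (rule fps_const_mult_apply_left[symmetric])

lemma linf_sig: "linf (sig g w)"
  unfolding linf_def sig_def
proof (intro conjI allI)
  show "w * ((a + b) oo g) = w * (a oo g) + w * (b oo g)" for a b
    by (simp add: fps_compose_add_distrib distrib_left)
  show "w * ((fps_const c * a) oo g) = fps_const c * (w * (a oo g))" for c a
    by (simp only: cmult_compose mult.left_commute)
qed

lemma linf_tau: "linf (tau h w)"
  unfolding linf_def tau_def
proof (intro conjI allI)
  show "(a + b) * inverse w oo h = (a * inverse w oo h) + (b * inverse w oo h)" for a b
    by (simp add: fps_compose_add_distrib distrib_right)
  show "(fps_const c * a) * inverse w oo h = fps_const c * (a * inverse w oo h)" for c a
    by (simp only: cmult_compose mult.assoc)
qed

lemma resp_sig: "fps_nth g 0 = 0 \<Longrightarrow> resp n (sig g w)"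
  unfolding resp_def sig_def by (auto intro: eqn_mult compose_eqn)

lemma resp_tau: "fps_nth h 0 = 0 \<Longrightarrow> resp n (tau h w)"
  unfolding resp_def tau_def by (auto intro!: compose_eqn eqn_mult)

context
  fixes g w :: "'a::field_char_0 fps" and n :: nat
  assumes g0: "fps_nth g 0 = 0" and g1: "fps_nth g 1 \<noteq> 0" and w0: "fps_nth w 0 \<noteq> 0"
begin

lemma h0: "fps_nth (fps_inv g) 0 = 0" by (simp add: fps_inv_def)
lemma h1: "fps_nth (fps_inv g) 1 \<noteq> 0" using g1 by (simp add: fps_inv_def)

lemma sig_tau: "mk n (sig g w) * mk n (tau (fps_inv g) w) = 1\<^sub>m n"
proof -
  have "mk n (sig g w) * mk n (tau (fps_inv g) w) = mk n (\<lambda>c. sig g w (tau (fps_inv g) w c))"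
    by (rule mk_mult[OF linf_sig linf_tau resp_sig[OF g0]])
  also have "\<dots> = mk n (\<lambda>c. c)"
  proof (rule mk_cong)
    fix c
    have "sig g w (tau (fps_inv g) w c) = w * ((c * inverse w) oo (fps_inv g oo g))"
      unfolding sig_def tau_def by (simp add: fps_compose_assoc[OF g0 h0])
    also have "\<dots> = c" using w0 by (simp add: fps_inv[OF g0 g1] mult.left_commute[of w] inverse_mult_eq_1')
    finally show "eqn n (sig g w (tau (fps_inv g) w c)) c" by simp
  qed
  finally show ?thesis by (simp add: mk_id)
qed

lemma tau_sig: "mk n (tau (fps_inv g) w) * mk n (sig g w) = 1\<^sub>m n"
proof -
  have "mk n (tau (fps_inv g) w) * mk n (sig g w) = mk n (\<lambda>c. tau (fps_inv g) w (sig g w c))"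
    by (rule mk_mult[OF linf_tau linf_sig resp_tau[OF h0]])
  also have "\<dots> = mk n (\<lambda>c. c)"
  proof (rule mk_cong)
    fix c
    have "tau (fps_inv g) w (sig g w c) = (c oo g) oo fps_inv g"
      unfolding sig_def tau_def using w0 by (simp add: mult.commute[of w] mult.assoc inverse_mult_eq_1' inverse_mult_eq_1)
    also have "\<dots> = c oo (g oo fps_inv g)" by (simp add: fps_compose_assoc[OF h0 g0])
    also have "\<dots> = c" by (simp add: fps_inv_right[OF g0 g1])
    finally show "eqn n (tau (fps_inv g) w (sig g w c)) c" by simp
  qed
  finally show ?thesis by (simp add: mk_id)
qed

lemma sig_M: "mk n (sig g w) * M n a = M n (a oo g) * mk n (sig g w)"
proof -
  have "mk n (sig g w) * M n a = mk n (\<lambda>c. sig g w (a * c))"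
    unfolding M_def by (rule mk_mult[OF linf_sig linf_M resp_sig[OF g0]])
  also have "\<dots> = mk n (\<lambda>c. (a oo g) * sig g w c)"
    by (rule mk_cong) (simp add: sig_def fps_compose_mult_distrib[OF g0] ac_simps)
  also have "\<dots> = M n (a oo g) * mk n (sig g w)"
    unfolding M_def by (rule mk_mult[OF linf_M linf_sig resp_M, symmetric])
  finally show ?thesis .
qed

lemma sig_theta: assumes u: "u \<in> args d n" and n1: "n \<ge> 1" and d1: "d \<ge> 1"
  and wd: "w ^ d = Ufps n (fps_inv g)"
  shows "theta d n (\<lambda>j. mk n (sig g w) *\<^sub>v u j) = theta d n u"
proof -
  have uc: "u j \<in> carrier_vec n" if "j < d" for j using u that by (simp add: args_def)
  let ?P = "\<Prod>j<d. Fv n (u j)"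
  have "theta d n (\<lambda>j. mk n (sig g w) *\<^sub>v u j) = fps_nth (\<Prod>j<d. Fv n (mk n (sig g w) *\<^sub>v u j)) (n - 1)"
    using n1 d1 by (intro theta_fps) (auto simp: args_def)
  also have "\<dots> = fps_nth (\<Prod>j<d. w * (Fv n (u j) oo g)) (n - 1)"
    using n1 uc by (intro eqn_nth eqn_prod) (auto simp: mk_vec[OF linf_sig] Fv_Vf sig_def)
  also have "(\<Prod>j<d. w * (Fv n (u j) oo g)) = w ^ d * (?P oo g)"
    by (simp add: prod.distrib fps_compose_prod_distrib[OF g0])
  also have "fps_nth (w ^ d * (?P oo g)) (n - 1) = fps_nth ((?P oo g) oo fps_inv g) (n - 1)"
    unfolding wd by (rule Ufps_prop[OF n1])
  also have "(?P oo g) oo fps_inv g = ?P"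
    by (simp add: fps_compose_assoc[OF h0 g0, symmetric] fps_inv_right[OF g0 g1])
  also have "fps_nth ?P (n - 1) = theta d n u" by (rule theta_fps[OF u n1 d1, symmetric])
  finally show ?thesis .
qed

end


lemma chi_surj:
  fixes \<phi> :: "'a::{alg_closed_field, field_char_0} mat \<Rightarrow> 'a mat"
  assumes d3: "d \<ge> 3" and n2: "n \<ge> 2" and phi: "\<phi> \<in> algaut d n"
  shows "\<exists>\<sigma>\<in>orth d n. chi d n \<sigma> = \<phi>"
proof -
  have n1: "n \<ge> 1" and d1: "d \<ge> 1" using n2 d3 by auto
  define g where "g = Phi n \<phi> fps_X"
  have g0: "fps_nth g 0 = 0" unfolding g_def by (rule g0[OF d3 n2 phi])
  have g1: "fps_nth g 1 \<noteq> 0" unfolding g_def by (rule g1[OF d3 n2 phi])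
  define h where "h = fps_inv g"
  have h0: "fps_nth h 0 = 0" unfolding h_def by (simp add: fps_inv_def)
  have h1: "fps_nth h 1 \<noteq> 0" unfolding h_def using g1 by (simp add: fps_inv_def)
  have U0: "fps_nth (Ufps n h) 0 \<noteq> 0" by (rule Ufps0[OF h0 h1 n1])
  obtain w where wd: "w ^ d = Ufps n h" and w0: "fps_nth w 0 \<noteq> 0" using fps_root[OF U0 d1] by blast
  define \<sigma> where "\<sigma> = mk n (sig g w)"
  have sc: "\<sigma> \<in> carrier_mat n n" by (simp add: \<sigma>_def)
  have "invertible_mat \<sigma>"
    unfolding \<sigma>_def by (rule invertible_of[OF mk_carrier mk_carrier sig_tau[OF g0 g1 w0] tau_sig[OF g0 g1 w0]])
  moreover have "theta d n (\<lambda>j. \<sigma> *\<^sub>v u j) = theta d n u" if "u \<in> args d n" for u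
    unfolding \<sigma>_def by (rule sig_theta[OF g0 g1 w0 that n1 d1 wd[unfolded h_def]])
  ultimately have s: "\<sigma> \<in> orth d n" using sc by (simp add: orth_def)
  have "chi d n \<sigma> f = \<phi> f" for f
  proof (cases "f \<in> cent d n")
    case True
    have "f \<in> range (M n)" using True cent_eq[OF d3 n1, where 'a='a] by simp
    then obtain a where a: "f = M n a" by (rule rangeE) (rule that)
    let ?t = "inv\<^bsub>O_grp d n\<^esub> \<sigma>"
    have t: "?t \<in> orth d n" and st: "\<sigma> * ?t = 1\<^sub>m n" using O_inv[OF s] by auto
    have tc: "?t \<in> carrier_mat n n" using t orth_carrier by auto
    have "chi d n \<sigma> f = \<sigma> * M n a * ?t" using True a by (simp add: chi_apply)
    also have "\<dots> = M n (a oo g) * \<sigma> * ?t" unfolding \<sigma>_def by (simp only: sig_M[OF g0 g1 w0])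
    also have "\<dots> = M n (a oo g) * (\<sigma> * ?t)"
      by (rule assoc_mult_mat[of _ n n _ n _ n]) (use sc tc in auto)
    also have "\<dots> = M n (a oo g)" using st by simp
    also have "\<dots> = \<phi> f" using a phi_M_compose[OF d3 n2 phi] by (simp add: g_def)
    finally show ?thesis .
  next
    case False
    have "\<phi> \<in> extensional (cent d n)" using phi by (simp add: algaut_def)
    then have "\<phi> f = undefined" using False by (simp add: extensional_def)
    then show ?thesis using False by (simp add: chi_def)
  qed
  then show ?thesis using s by blast
qed


theorem theorem4p3:
  fixes d n :: nat
  assumes "d \<ge> 3" and "n \<ge> 2"
  shows "group (mu_grp d :: 'k::{alg_closed_field, field_char_0} monoid)
       \<and> group (O_grp d n :: 'k mat monoid)
       \<and> group (G_grp d n :: ('k mat \<Rightarrow> 'k mat) monoid)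
       \<and> iota n \<in> hom (mu_grp d :: 'k monoid) (O_grp d n)
       \<and> inj_on (iota n) (carrier (mu_grp d :: 'k monoid))
       \<and> chi d n \<in> hom (O_grp d n :: 'k mat monoid) (G_grp d n)
       \<and> iota n ` carrier (mu_grp d :: 'k monoid)
           = kernel (O_grp d n :: 'k mat monoid) (G_grp d n) (chi d n)
       \<and> chi d n ` carrier (O_grp d n :: 'k mat monoid) = carrier (G_grp d n)"
proof -
  have d3: "d \<ge> 3" and n2: "n \<ge> 2" using assms by auto
  have d1: "d \<ge> 1" and n1: "n \<ge> 1" using assms by auto
  have mu_c: "carrier (mu_grp d :: 'k monoid) = {\<zeta>. \<zeta> ^ d = 1}" by (simp add: mu_grp_def)
  have G_c: "carrier (G_grp d n :: ('k mat \<Rightarrow> 'k mat) monoid) = algaut d n" by (simp add: G_grp_def)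
  have G_m: "\<And>x y. x \<otimes>\<^bsub>(G_grp d n :: ('k mat \<Rightarrow> 'k mat) monoid)\<^esub> y = restrict (x \<circ> y) (cent d n)"
    by (simp add: G_grp_def)
  have G_one: "\<one>\<^bsub>(G_grp d n :: ('k mat \<Rightarrow> 'k mat) monoid)\<^esub> = restrict id (cent d n)"
    by (simp add: G_grp_def)
  have h1: "iota n \<in> hom (mu_grp d :: 'k monoid) (O_grp d n)"
  proof (rule homI)
    show "iota n x \<in> carrier (O_grp d n)" if "x \<in> carrier (mu_grp d :: 'k monoid)" for x
      using that iota_orth[OF _ d1 n1] by (simp add: mu_grp_def)
    show "iota n (x \<otimes>\<^bsub>mu_grp d\<^esub> y) = iota n x \<otimes>\<^bsub>O_grp d n\<^esub> iota n y" for x y :: 'k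
      by (simp add: mu_grp_def iota_mult)
  qed
  have h2: "inj_on (iota n) (carrier (mu_grp d :: 'k monoid))"
    using iota_inj[OF n1] by (auto simp: inj_on_def)
  have h3: "chi d n \<in> hom (O_grp d n :: 'k mat monoid) (G_grp d n)"
  proof (rule homI)
    show "chi d n x \<in> carrier (G_grp d n)" if "x \<in> carrier (O_grp d n :: 'k mat monoid)" for x
      using that chi_algaut[OF d3 n1] by (simp add: G_c)
    show "chi d n (x \<otimes>\<^bsub>O_grp d n\<^esub> y) = chi d n x \<otimes>\<^bsub>G_grp d n\<^esub> chi d n y"
      if "x \<in> carrier (O_grp d n :: 'k mat monoid)" "y \<in> carrier (O_grp d n :: 'k mat monoid)" for x y
      using that chi_mult by (simp add: G_m)
  qed
  have h4: "iota n ` carrier (mu_grp d :: 'k monoid) = kernel (O_grp d n :: 'k mat monoid) (G_grp d n) (chi d n)"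
  proof
    show "iota n ` carrier (mu_grp d :: 'k monoid) \<subseteq> kernel (O_grp d n) (G_grp d n) (chi d n)"
      using iota_kernel[OF d3 n1] by (auto simp: kernel_def mu_c G_one)
    show "kernel (O_grp d n :: 'k mat monoid) (G_grp d n) (chi d n) \<subseteq> iota n ` carrier (mu_grp d)"
    proof
      fix \<sigma> :: "'k mat" assume "\<sigma> \<in> kernel (O_grp d n) (G_grp d n) (chi d n)"
      then have s: "\<sigma> \<in> orth d n" and k: "chi d n \<sigma> = restrict id (cent d n)"
        by (auto simp: kernel_def G_one)
      obtain \<zeta> where "\<zeta> ^ d = 1" "\<sigma> = iota n \<zeta>" using kernel_iota[OF d3 n1 s k] by blast
      then show "\<sigma> \<in> iota n ` carrier (mu_grp d)" by (auto simp: mu_c)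
    qed
  qed
  have h5: "chi d n ` carrier (O_grp d n :: 'k mat monoid) = carrier (G_grp d n)"
  proof
    show "chi d n ` carrier (O_grp d n :: 'k mat monoid) \<subseteq> carrier (G_grp d n)"
      using chi_algaut[OF d3 n1] by (auto simp: G_c)
    show "carrier (G_grp d n) \<subseteq> chi d n ` carrier (O_grp d n :: 'k mat monoid)"
    proof
      fix \<phi> :: "'k mat \<Rightarrow> 'k mat" assume "\<phi> \<in> carrier (G_grp d n)"
      then have "\<phi> \<in> algaut d n" by (simp add: G_c)
      then obtain \<sigma> where "\<sigma> \<in> orth d n" "chi d n \<sigma> = \<phi>" using chi_surj[OF d3 n2] by blast
      then show "\<phi> \<in> chi d n ` carrier (O_grp d n)" by force
    qed
  qed
  show ?thesis using group_mu[OF d1] group_O group_G[OF d3 n1] h1 h2 h3 h4 h5 by blast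
qed


end
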